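(* Assume the Smoothness Assumption (see context), and let $\{x^k_\tau,y^k_\tau,z^k_\tau\}$ be generated by Algorithm 1 with $T=M$, with output $(\tilde x,\tilde y)$. Then $$\begin{aligned}&\mathbb E\big[\mathrm{dist}(0,\nabla_xF(\tilde x,\tilde y)+\mathcal N_{\mathcal X}(\tilde x))^2\big]+\mathbb E\big[\mathrm{dist}(0,-\nabla_yF(\tilde x,\tilde y)+\mathcal N_{\mathcal Y}(\tilde y))^2\big]\\ \le{}&\frac1{KT}\Big(\frac4{\alpha_x^2}+16L_x^2+8r^2+6L_y^2\Big)\sum_{k=0}^{K-1}\sum_{\tau=0}^{T-1}\mathbb E\|x^k_{\tau+1}-x^k_\tau\|^2+\frac1{KT}\Big(\frac3{\alpha_y^2}+22L_y^2\Big)\sum_{k=0}^{K-1}\sum_{\tau=0}^{T-1}\mathbb E\|y^k_{\tau+1}-y^k_\tau\|^2\\ &+\frac{8r^2}{KT}\sum_{k=0}^{K-1}\sum_{\tau=0}^{T-1}\mathbb E\|x^k_{\tau+1}-z^k_\tau\|^2+(4C_{\sigma,x}+3C_{\sigma,y}),\end{aligned}$$ where $C_{\sigma,x}=C_{\sigma,y}=0$ in the finite-sum setting and $C_{\sigma,x}=\sigma_x^2/B$, $C_{\sigma,y}=\sigma_y^2/B$ in the online setting.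
   Context: Problem. Let $\mathcal X\subseteq\mathbb R^{d_x}$, $\mathcal Y\subseteq\mathbb R^{d_y}$ be nonempty closed convex sets, $\mathbb P$ a distribution on $\Xi$, $f:\mathbb R^{d_x}\times\mathbb R^{d_y}\times\Xi\to\mathbb R$, $F(x,y)=\mathbb E_{\xi\sim\mathbb P}[f(x,y;\xi)]$ (finite-sum setting: empirical distribution of $N$ samples; online setting: i.i.d. sampling). $\mathcal N_S$ denotes the normal cone and $\mathrm{dist}$ the Euclidean distance. Smoothness Assumption: (i) $\mathcal Y$ compact with diameter $D_{\mathcal Y}$; (ii) $\mathbb E|f(x_1,y_1;\xi)-f(x_2,y_2;\xi)|\le\ell(\|x_1-x_2\|+\|y_1-y_2\|)$ on $\mathcal X\times\mathcal Y$; (iii) for all $x,x_i\in\mathcal X$, $y,y_i\in\mathcal Y$: $\mathbb E\|\nabla_xf(x_1,y;\xi)-\nabla_xf(x_2,y;\xi)\|^2\le L_x^2\|x_1-x_2\|^2$, $\mathbb E\|\nabla_xf(x,y_1;\xi)-\nabla_xf(x,y_2;\xi)\|^2\le L_y^2\|y_1-y_2\|^2$, $\mathbb E\|\nabla_yf(x_1,y_1;\xi)-\nabla_yf(x_2,y_2;\xi)\|^2\le L_y^2(\|x_1-x_2\|^2+\|y_1-y_2\|^2)$; (iv) $F(\cdot,y)+\frac\rho2\|\cdot\|^2$ convex on $\mathcal X$ for each $y$; (v) $\mathbb E[\nabla f(x,y;\xi)\mid(x,y)]=\nabla F(x,y)$, $\mathbb E\|\nabla_xf-\nabla_xF\|^2\le\sigma_x^2$,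 $\mathbb E\|\nabla_yf-\nabla_yF\|^2\le\sigma_y^2$; (vi) $\max_y\min_xF\ge\underline F$. Algorithm 1: Input $(x^0_0,y^0_0,z^0_0)$, positive integers $K,T,M,B$, parameters $\alpha_x,\alpha_y,\beta,r>0$. For $k=0,\dots,K-1$, $\tau=0,\dots,T-1$: if $\tau=0$, $G^k_{x,0}=\frac1B\sum_{i=1}^B\nabla_xf(x^k_0,y^k_0;\xi^k_{0,i})$, $G^k_{y,0}$ analogously, with $B$ i.i.d. samples (online) or all $N$ samples, $B=N$ (finite-sum); if $\tau\ge1$, with $M$ fresh i.i.d. samples, $G^k_{x,\tau}=\frac1M\sum_{i=1}^M[\nabla_xf(x^k_\tau,y^k_\tau;\xi^k_{\tau,i})-\nabla_xf(x^k_{\tau-1},y^k_{\tau-1};\xi^k_{\tau,i})]+G^k_{x,\tau-1}$, $G^k_{y,\tau}$ analogously. Update $x^k_{\tau+1}=\mathrm{proj}_{\mathcal X}(x^k_\tau-\alpha_x[G^k_{x,\tau}+r(x^k_\tau-z^k_\tau)])$, $y^k_{\tau+1}=\mathrm{proj}_{\mathcal Y}(y^k_\tau+\alpha_yG^k_{y,\tau})$, $z^k_{\tau+1}=z^k_\tau+\beta(x^k_{\tau+1}-z^k_\tau)$; $(x^{k+1}_0,y^{k+1}_0,z^{k+1}_0)=(x^k_T,y^k_T,z^k_T)$. Output $(\tilde x,\tilde y)$ sampled uniformly at random from $\{(x^k_{\tau+1},y^k_{\tau+1}):0\le k\le K-1,0\le\tau\le T-1\}$. *)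

theory Defs
  imports "HOL-Probability.Probability"
begin

definition normal_cone :: "'a::real_inner set \<Rightarrow> 'a \<Rightarrow> 'a set" where
  "normal_cone S x = (if x \<in> S then {v. \<forall>w\<in>S. inner v (w - x) \<le> 0} else {})"

text \<open>Algorithm 1, indexed by the global step counter t = k*T + tau.
  The state at step t is (x_t, y_t, z_t, Gx_t, Gy_t), where Gx_t, Gy_t are the
  gradient estimators computed at (x_t, y_t).  The function init k x y gives the
  estimator used at the start (tau = 0) of outer iteration k, and xi k tau i is the
  i-th sample drawn at inner step tau of outer iteration k.\<close>
primrec alg ::
  "'a::euclidean_space set \<Rightarrow> 'b::euclidean_space set \<Rightarrow> real \<Rightarrow> real \<Rightarrow> real \<Rightarrow> real
   \<Rightarrow> nat \<Rightarrow> nat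
   \<Rightarrow> ('a \<Rightarrow> 'b \<Rightarrow> 'c \<Rightarrow> 'a) \<Rightarrow> ('a \<Rightarrow> 'b \<Rightarrow> 'c \<Rightarrow> 'b)
   \<Rightarrow> (nat \<Rightarrow> 'a \<Rightarrow> 'b \<Rightarrow> 'a \<times> 'b) \<Rightarrow> (nat \<Rightarrow> nat \<Rightarrow> nat \<Rightarrow> 'c)
   \<Rightarrow> 'a \<Rightarrow> 'b \<Rightarrow> 'a \<Rightarrow> nat \<Rightarrow> 'a \<times> 'b \<times> 'a \<times> 'a \<times> 'b" where
  "alg X Y ax ay b r T M gx gy init xi x0 y0 z0 0 =
     (x0, y0, z0, fst (init 0 x0 y0), snd (init 0 x0 y0))"
| "alg X Y ax ay b r T M gx gy init xi x0 y0 z0 (Suc t) =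
     (case alg X Y ax ay b r T M gx gy init xi x0 y0 z0 t of (x, y, z, Gx, Gy) \<Rightarrow>
       (let x' = closest_point X (x - ax *\<^sub>R (Gx + r *\<^sub>R (x - z)));
            y' = closest_point Y (y + ay *\<^sub>R Gy);
            z' = z + b *\<^sub>R (x' - z);
            k = Suc t div T;
            tau = Suc t mod T
        in if tau = 0 then (x', y', z', fst (init k x' y'), snd (init k x' y'))
           else (x', y', z',
                 (1 / real M) *\<^sub>R (\<Sum>i<M. gx x' y' (xi k tau i) - gx x y (xi k tau i)) + Gx,
                 (1 / real M) *\<^sub>R (\<Sum>i<M. gy x' y' (xi k tau i) - gy x y (xi k tau i)) + Gy)))"

definition alg_x where "alg_x X Y ax ay b r T M gx gy init xi x0 y0 z0 t =
  fst (alg X Y ax ay b r T M gx gy init xi x0 y0 z0 t)"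
definition alg_y where "alg_y X Y ax ay b r T M gx gy init xi x0 y0 z0 t =
  fst (snd (alg X Y ax ay b r T M gx gy init xi x0 y0 z0 t))"
definition alg_z where "alg_z X Y ax ay b r T M gx gy init xi x0 y0 z0 t =
  fst (snd (snd (alg X Y ax ay b r T M gx gy init xi x0 y0 z0 t)))"

end

theory Submission
  imports Defs
begin


lemma GI:
  fixes Z :: "'i \<Rightarrow> 'w \<Rightarrow> 'c"
  assumes Q: "prob_space Q" and P: "prob_space P"
    and ind: "prob_space.indep_vars Q (\<lambda>_. P) Z I"
    and AI: "A \<subseteq> I" and jI: "j \<in> I" and jA: "j \<notin> A"
    and dj: "distr Q P (Z j) = P"
    and h: "h \<in> borel_measurable (Pi\<^sub>M A (\<lambda>_. P) \<Otimes>\<^sub>M P)"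
  shows "(\<integral>\<^sup>+\<omega>. h (restrict (\<lambda>i. Z i \<omega>) A, Z j \<omega>) \<partial>Q)
       = (\<integral>\<^sup>+\<omega>. (\<integral>\<^sup>+s. h (restrict (\<lambda>i. Z i \<omega>) A, s) \<partial>P) \<partial>Q)"
proof -
  interpret Q: prob_space Q by fact
  interpret P: prob_space P by fact
  let ?R = "\<lambda>\<omega>. restrict (\<lambda>i. Z i \<omega>) A"
  let ?S = "\<lambda>\<omega>. restrict (\<lambda>i. Z i \<omega>) {j}"
  let ?MA = "Pi\<^sub>M A (\<lambda>_. P)" and ?MJ = "Pi\<^sub>M {j} (\<lambda>_. P)"
  have iv: "Q.indep_var ?MA ?R ?MJ ?S"
    using Q.indep_var_restrict[OF ind, of A "{j}"] AI jI jA by auto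
  have Rm: "?R \<in> measurable Q ?MA" and Sm: "?S \<in> measurable Q ?MJ"
    using iv unfolding Q.indep_var_distribution_eq by auto
  have Zm: "Z j \<in> measurable Q P"
    using measurable_compose[OF Sm measurable_component_singleton[OF singletonI, of j "\<lambda>_. P"]] by simp
  have eq: "distr Q ?MA ?R \<Otimes>\<^sub>M distr Q ?MJ ?S = distr Q (?MA \<Otimes>\<^sub>M ?MJ) (\<lambda>x. (?R x, ?S x))"
    using iv unfolding Q.indep_var_distribution_eq by auto
  interpret D: prob_space "distr Q ?MA ?R"
    by (rule Q.prob_space_distr[OF Rm])
  interpret E: prob_space "distr Q ?MJ ?S"
    by (rule Q.prob_space_distr[OF Sm])
  have h': "(\<lambda>p. h (fst p, snd p j)) \<in> borel_measurable (?MA \<Otimes>\<^sub>M ?MJ)"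
    using h by measurable
  have inner: "(\<integral>\<^sup>+v. h (u, v j) \<partial>distr Q ?MJ ?S) = (\<integral>\<^sup>+s. h (u, s) \<partial>P)" if u: "u \<in> space ?MA" for u
  proof -
    have hu: "(\<lambda>s. h (u, s)) \<in> borel_measurable P"
      using h u by measurable
    have "(\<integral>\<^sup>+v. h (u, v j) \<partial>distr Q ?MJ ?S) = (\<integral>\<^sup>+\<omega>. h (u, Z j \<omega>) \<partial>Q)"
      by (subst nn_integral_distr) (use Sm hu in auto)
    also have "\<dots> = (\<integral>\<^sup>+s. h (u, s) \<partial>distr Q P (Z j))"
      by (subst nn_integral_distr) (use Zm hu in auto)
    finally show ?thesis using dj by simp
  qed
  have "(\<integral>\<^sup>+\<omega>. h (?R \<omega>, Z j \<omega>) \<partial>Q) = (\<integral>\<^sup>+\<omega>. (\<lambda>p. h (fst p, snd p j)) (?R \<omega>, ?S \<omega>) \<partial>Q)"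
    by simp
  also have "\<dots> = (\<integral>\<^sup>+p. h (fst p, snd p j) \<partial>distr Q (?MA \<Otimes>\<^sub>M ?MJ) (\<lambda>x. (?R x, ?S x)))"
    by (rule nn_integral_distr[symmetric]) (use Rm Sm h' in auto)
  also have "\<dots> = (\<integral>\<^sup>+p. h (fst p, snd p j) \<partial>(distr Q ?MA ?R \<Otimes>\<^sub>M distr Q ?MJ ?S))"
    by (simp add: eq)
  also have "\<dots> = (\<integral>\<^sup>+u. (\<integral>\<^sup>+v. h (u, v j) \<partial>distr Q ?MJ ?S) \<partial>distr Q ?MA ?R)"
    by (rule E.nn_integral_fst[symmetric, where f="\<lambda>p. h (fst p, snd p j)", simplified]) (use h' in simp)
  also have "\<dots> = (\<integral>\<^sup>+u. (\<integral>\<^sup>+s. h (u, s) \<partial>P) \<partial>distr Q ?MA ?R)"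
    by (rule nn_integral_cong) (simp add: inner)
  also have "\<dots> = (\<integral>\<^sup>+\<omega>. (\<integral>\<^sup>+s. h (?R \<omega>, s) \<partial>P) \<partial>Q)"
    by (rule nn_integral_distr) (use Rm P.borel_measurable_nn_integral_fst[OF h] in auto)
  finally show ?thesis .
qed



lemma PW:
  fixes D :: "'c \<Rightarrow> 'v::euclidean_space"
  assumes P: "prob_space P" and i1: "integrable P D" and i2: "integrable P (\<lambda>s. (norm (D s))\<^sup>2)"
    and m0: "(\<integral>s. D s \<partial>P) = 0"
  shows "(\<integral>\<^sup>+s. ennreal ((norm (w + c *\<^sub>R D s))\<^sup>2) \<partial>P)
       = ennreal ((norm w)\<^sup>2 + c\<^sup>2 * (\<integral>s. (norm (D s))\<^sup>2 \<partial>P))"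
proof -
  interpret P: prob_space P by fact
  have eq: "(norm (w + c *\<^sub>R D s))\<^sup>2 = (norm w)\<^sup>2 + (2 * c) * inner w (D s) + c\<^sup>2 * (norm (D s))\<^sup>2" for s
    by (simp only: power2_norm_eq_inner) (simp add: inner_add_left inner_add_right inner_commute algebra_simps power2_eq_square)
  have ii: "integrable P (\<lambda>s. inner w (D s))" using i1 by auto
  have int: "integrable P (\<lambda>s. (norm (w + c *\<^sub>R D s))\<^sup>2)"
    unfolding eq using ii i2 by auto
  have "(\<integral>s. (norm (w + c *\<^sub>R D s))\<^sup>2 \<partial>P) = (norm w)\<^sup>2 + (2*c) * (\<integral>s. inner w (D s) \<partial>P) + c\<^sup>2 * (\<integral>s. (norm (D s))\<^sup>2 \<partial>P)"
    unfolding eq using ii i2 by (simp add: P.prob_space)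
  also have "(\<integral>s. inner w (D s) \<partial>P) = 0" using i1 m0 by simp
  finally have "(\<integral>s. (norm (w + c *\<^sub>R D s))\<^sup>2 \<partial>P) = (norm w)\<^sup>2 + c\<^sup>2 * (\<integral>s. (norm (D s))\<^sup>2 \<partial>P)" by simp
  with nn_integral_eq_integral[OF int] show ?thesis by simp
qed

lemma SL:
  fixes Z :: "'i \<Rightarrow> 'w \<Rightarrow> 'c" and a :: "('i \<Rightarrow> 'c) \<Rightarrow> 'v::euclidean_space"
    and D :: "('i \<Rightarrow> 'c) \<Rightarrow> 'c \<Rightarrow> 'v" and bnd :: "('i \<Rightarrow> 'c) \<Rightarrow> real"
    and idx :: "nat \<Rightarrow> 'i"
  assumes Q: "prob_space Q" and P: "prob_space P"
    and ind: "prob_space.indep_vars Q (\<lambda>_. P) Z I"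
    and AI: "A \<subseteq> I" and newI: "\<And>i. i < n \<Longrightarrow> idx i \<in> I" and newA: "\<And>i. i < n \<Longrightarrow> idx i \<notin> A"
    and inj: "inj idx"
    and dj: "\<And>i. i < n \<Longrightarrow> distr Q P (Z (idx i)) = P"
    and am: "a \<in> borel_measurable (Pi\<^sub>M A (\<lambda>_. P))"
    and Dm: "(\<lambda>p. D (fst p) (snd p)) \<in> borel_measurable (Pi\<^sub>M A (\<lambda>_. P) \<Otimes>\<^sub>M P)"
    and bm: "bnd \<in> borel_measurable (Pi\<^sub>M A (\<lambda>_. P))"
    and Di1: "\<And>u. u \<in> space (Pi\<^sub>M A (\<lambda>_. P)) \<Longrightarrow> integrable P (D u)"
    and Di2: "\<And>u. u \<in> space (Pi\<^sub>M A (\<lambda>_. P)) \<Longrightarrow> integrable P (\<lambda>s. (norm (D u s))\<^sup>2)"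
    and D0: "\<And>u. u \<in> space (Pi\<^sub>M A (\<lambda>_. P)) \<Longrightarrow> (\<integral>s. D u s \<partial>P) = 0"
    and Db: "\<And>u. u \<in> space (Pi\<^sub>M A (\<lambda>_. P)) \<Longrightarrow> (\<integral>s. (norm (D u s))\<^sup>2 \<partial>P) \<le> bnd u"
  shows "(\<integral>\<^sup>+\<omega>. ennreal ((norm (a (restrict (\<lambda>i. Z i \<omega>) A)
              + c *\<^sub>R (\<Sum>i<n. D (restrict (\<lambda>i. Z i \<omega>) A) (Z (idx i) \<omega>))))\<^sup>2) \<partial>Q)
       \<le> (\<integral>\<^sup>+\<omega>. ennreal ((norm (a (restrict (\<lambda>i. Z i \<omega>) A)))\<^sup>2
              + c\<^sup>2 * real n * bnd (restrict (\<lambda>i. Z i \<omega>) A)) \<partial>Q)"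
proof -
  interpret Q: prob_space Q by fact
  interpret P: prob_space P by fact
  let ?MA = "Pi\<^sub>M A (\<lambda>_. P)"
  define Am where "Am m = A \<union> idx ` {..<m}" for m
  let ?R = "\<lambda>B \<omega>. restrict (\<lambda>i. Z i \<omega>) B"
  define W where "W m u = a (restrict u A) + c *\<^sub>R (\<Sum>i<m. D (restrict u A) (u (idx i)))" for m u
  have bnn: "0 \<le> bnd u" if "u \<in> space ?MA" for u
  proof -
    have "0 \<le> (\<integral>s. (norm (D u s))\<^sup>2 \<partial>P)" by (intro integral_nonneg_AE) auto
    then show ?thesis using Db[OF that] by linarith
  qed
  have Zm: "Z j \<in> measurable Q P" if "j \<in> I" for j
    using ind that unfolding Q.indep_vars_def by auto
  have Rm: "?R B \<in> measurable Q (Pi\<^sub>M B (\<lambda>_. P))" if "B \<subseteq> I" for B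
    using that by (intro measurable_restrict Zm) auto
  have Wm: "W m \<in> borel_measurable (Pi\<^sub>M (Am m) (\<lambda>_. P))" if "m \<le> n" for m
  proof -
    have r: "(\<lambda>u. restrict u A) \<in> measurable (Pi\<^sub>M (Am m) (\<lambda>_. P)) ?MA"
      by (rule measurable_restrict_subset) (auto simp: Am_def)
    have "(\<lambda>u. D (restrict u A) (u (idx i))) \<in> borel_measurable (Pi\<^sub>M (Am m) (\<lambda>_. P))" if "i < m" for i
    proof -
      have "(\<lambda>u. (restrict u A, u (idx i))) \<in> measurable (Pi\<^sub>M (Am m) (\<lambda>_. P)) (?MA \<Otimes>\<^sub>M P)"
        using r that by (intro measurable_Pair) (auto simp: Am_def intro!: measurable_component_singleton)
      from measurable_compose[OF this Dm] show ?thesis by simp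
    qed
    then show ?thesis unfolding W_def
      using measurable_compose[OF r am] by (intro borel_measurable_add borel_measurable_scaleR borel_measurable_sum) auto
  qed
  have RA: "restrict (?R (Am m) \<omega>) A = ?R A \<omega>" for m \<omega>
    by (auto simp: Am_def restrict_def fun_eq_iff)
  have WR: "W m (?R (Am m) \<omega>) = a (?R A \<omega>) + c *\<^sub>R (\<Sum>i<m. D (?R A \<omega>) (Z (idx i) \<omega>))" for m \<omega>
    unfolding W_def RA by (auto simp: Am_def intro!: sum.cong)
  have bRm: "(\<lambda>\<omega>. bnd (?R A \<omega>)) \<in> borel_measurable Q"
    using measurable_compose[OF Rm[OF AI] bm] .
  have main: "(\<integral>\<^sup>+\<omega>. ennreal ((norm (W m (?R (Am m) \<omega>)))\<^sup>2) \<partial>Q)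
       \<le> (\<integral>\<^sup>+\<omega>. ennreal ((norm (a (?R A \<omega>)))\<^sup>2 + c\<^sup>2 * real m * bnd (?R A \<omega>)) \<partial>Q)" if "m \<le> n" for m
    using that
  proof (induction m)
    case 0
    then show ?case unfolding WR by (simp add: restrict_def)
  next
    case (Suc m)
    have AmI: "Am m \<subseteq> I" using AI newI Suc.prems by (auto simp: Am_def)
    have jI: "idx m \<in> I" using newI Suc.prems by auto
    have jA: "idx m \<notin> Am m" using newA Suc.prems inj by (auto simp: Am_def inj_def)
    define h where "h p = ennreal ((norm (W m (fst p) + c *\<^sub>R D (restrict (fst p) A) (snd p)))\<^sup>2)" for p
    have hm: "h \<in> borel_measurable (Pi\<^sub>M (Am m) (\<lambda>_. P) \<Otimes>\<^sub>M P)"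
    proof -
      have r: "(\<lambda>p. (restrict (fst p) A, snd p)) \<in> measurable (Pi\<^sub>M (Am m) (\<lambda>_. P) \<Otimes>\<^sub>M P) (?MA \<Otimes>\<^sub>M P)"
        by (intro measurable_Pair measurable_compose[OF measurable_fst measurable_restrict_subset] measurable_snd)
           (auto simp: Am_def)
      have "(\<lambda>p. D (restrict (fst p) A) (snd p)) \<in> borel_measurable (Pi\<^sub>M (Am m) (\<lambda>_. P) \<Otimes>\<^sub>M P)"
        using measurable_compose[OF r Dm] by simp
      moreover have "(\<lambda>p. W m (fst p)) \<in> borel_measurable (Pi\<^sub>M (Am m) (\<lambda>_. P) \<Otimes>\<^sub>M P)"
        using measurable_compose[OF measurable_fst Wm[of m]] Suc.prems by simp
      ultimately show ?thesis unfolding h_def by measurable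
    qed
    have WS: "W (Suc m) (?R (Am (Suc m)) \<omega>) = W m (?R (Am m) \<omega>) + c *\<^sub>R D (?R A \<omega>) (Z (idx m) \<omega>)" for \<omega>
      unfolding WR by (simp add: algebra_simps scaleR_add_right)
    have "(\<integral>\<^sup>+\<omega>. ennreal ((norm (W (Suc m) (?R (Am (Suc m)) \<omega>)))\<^sup>2) \<partial>Q)
        = (\<integral>\<^sup>+\<omega>. h (?R (Am m) \<omega>, Z (idx m) \<omega>) \<partial>Q)"
      unfolding WS h_def fst_conv snd_conv RA ..
    also have "\<dots> = (\<integral>\<^sup>+\<omega>. (\<integral>\<^sup>+s. h (?R (Am m) \<omega>, s) \<partial>P) \<partial>Q)"
      by (rule GI[OF Q P ind AmI jI jA dj[OF Suc.prems[THEN Suc_le_lessD]] hm])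
    also have "\<dots> \<le> (\<integral>\<^sup>+\<omega>. ennreal ((norm (W m (?R (Am m) \<omega>)))\<^sup>2 + c\<^sup>2 * bnd (?R A \<omega>)) \<partial>Q)"
    proof (rule nn_integral_mono)
      fix \<omega> assume \<omega>: "\<omega> \<in> space Q"
      have u: "?R A \<omega> \<in> space ?MA"
        using measurable_space[OF Rm[OF AI] \<omega>] .
      have "(\<integral>\<^sup>+s. h (?R (Am m) \<omega>, s) \<partial>P) = ennreal ((norm (W m (?R (Am m) \<omega>)))\<^sup>2 + c\<^sup>2 * (\<integral>s. (norm (D (?R A \<omega>) s))\<^sup>2 \<partial>P))"
        unfolding h_def fst_conv snd_conv RA
        by (rule PW[OF P Di1[OF u] Di2[OF u] D0[OF u]])
      also have "\<dots> \<le> ennreal ((norm (W m (?R (Am m) \<omega>)))\<^sup>2 + c\<^sup>2 * bnd (?R A \<omega>))"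
        using Db[OF u] by (intro ennreal_leI add_left_mono mult_left_mono) auto
      finally show "(\<integral>\<^sup>+s. h (?R (Am m) \<omega>, s) \<partial>P) \<le> ennreal ((norm (W m (?R (Am m) \<omega>)))\<^sup>2 + c\<^sup>2 * bnd (?R A \<omega>))" .
    qed
    also have "\<dots> = (\<integral>\<^sup>+\<omega>. ennreal ((norm (W m (?R (Am m) \<omega>)))\<^sup>2) \<partial>Q) + (\<integral>\<^sup>+\<omega>. ennreal (c\<^sup>2 * bnd (?R A \<omega>)) \<partial>Q)"
    proof -
      have "(\<lambda>\<omega>. W m (?R (Am m) \<omega>)) \<in> borel_measurable Q"
        using measurable_compose[OF Rm[OF AmI] Wm] Suc.prems by simp
      then show ?thesis
        using bRm bnn measurable_space[OF Rm[OF AI]]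
        by (subst nn_integral_add[symmetric]) (auto intro!: nn_integral_cong simp: ennreal_plus[symmetric] simp del: ennreal_plus)
    qed
    also have "\<dots> \<le> (\<integral>\<^sup>+\<omega>. ennreal ((norm (a (?R A \<omega>)))\<^sup>2 + c\<^sup>2 * real m * bnd (?R A \<omega>)) \<partial>Q) + (\<integral>\<^sup>+\<omega>. ennreal (c\<^sup>2 * bnd (?R A \<omega>)) \<partial>Q)"
      using Suc.IH Suc.prems by (intro add_right_mono) (simp add: restrict_def)
    also have "\<dots> = (\<integral>\<^sup>+\<omega>. ennreal ((norm (a (?R A \<omega>)))\<^sup>2 + c\<^sup>2 * real (Suc m) * bnd (?R A \<omega>)) \<partial>Q)"
    proof -
      have "(\<lambda>\<omega>. a (?R A \<omega>)) \<in> borel_measurable Q"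
        using measurable_compose[OF Rm[OF AI] am] .
      then show ?thesis
        using bRm bnn measurable_space[OF Rm[OF AI]]
        by (subst nn_integral_add[symmetric]) (auto intro!: nn_integral_cong simp: ennreal_plus[symmetric] algebra_simps simp del: ennreal_plus)
    qed
    finally show ?case .
  qed
  show ?thesis using main[of n] WR[of n] by simp
qed



lemma SQI:
  fixes f :: "'c \<Rightarrow> 'v::euclidean_space"
  assumes "finite_measure M" "f \<in> borel_measurable M" "integrable M (\<lambda>s. (norm (f s))\<^sup>2)"
  shows "integrable M f"
proof -
  interpret finite_measure M by fact
  have i: "integrable M (\<lambda>s. 1 + (norm (f s))\<^sup>2)" using assms(3) by auto
  have b: "norm (f x) \<le> norm (1 + (norm (f x))\<^sup>2)" for x
  proof -
    have "norm (f x) \<le> 1 + (norm (f x))\<^sup>2"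
    proof (cases "norm (f x) \<le> 1")
      case True then show ?thesis by (smt (verit) zero_le_power2)
    next
      case False then have "norm (f x) * 1 \<le> norm (f x) * norm (f x)" by (intro mult_left_mono) auto
      then show ?thesis by (simp add: power2_eq_square)
    qed
    then show ?thesis by simp
  qed
  show ?thesis
    by (rule Bochner_Integration.integrable_bound[OF i assms(2)]) (rule AE_I2, use b in simp)
qed

lemma Jvar:
  fixes h :: "'c \<Rightarrow> 'v::euclidean_space"
  assumes P: "prob_space P" and i1: "integrable P h" and i2: "integrable P (\<lambda>s. (norm (h s))\<^sup>2)"
  shows "integrable P (\<lambda>s. (norm (h s - (\<integral>s. h s \<partial>P)))\<^sup>2)"
    and "(\<integral>s. (norm (h s - (\<integral>s. h s \<partial>P)))\<^sup>2 \<partial>P) = (\<integral>s. (norm (h s))\<^sup>2 \<partial>P) - (norm (\<integral>s. h s \<partial>P))\<^sup>2"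
    and "(\<integral>s. (norm (h s - (\<integral>s. h s \<partial>P)))\<^sup>2 \<partial>P) \<le> (\<integral>s. (norm (h s))\<^sup>2 \<partial>P)"
    and "(norm (\<integral>s. h s \<partial>P))\<^sup>2 \<le> (\<integral>s. (norm (h s))\<^sup>2 \<partial>P)"
proof -
  interpret P: prob_space P by fact
  define m where "m = (\<integral>s. h s \<partial>P)"
  have eq: "(norm (h s - m))\<^sup>2 = (norm (h s))\<^sup>2 - 2 * inner (h s) m + (norm m)\<^sup>2" for s
    by (simp only: power2_norm_eq_inner) (simp add: inner_diff_left inner_diff_right inner_commute algebra_simps)
  have ii: "integrable P (\<lambda>s. inner (h s) m)" using i1 by auto
  show int: "integrable P (\<lambda>s. (norm (h s - (\<integral>s. h s \<partial>P)))\<^sup>2)"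
    unfolding m_def[symmetric] eq using ii i2 by auto
  have "(\<integral>s. (norm (h s - m))\<^sup>2 \<partial>P) = (\<integral>s. (norm (h s))\<^sup>2 \<partial>P) - 2 * (\<integral>s. inner (h s) m \<partial>P) + (norm m)\<^sup>2"
    unfolding eq using ii i2 by (simp add: P.prob_space)
  also have "(\<integral>s. inner (h s) m \<partial>P) = inner m m" using i1 by (simp add: m_def)
  finally have *: "(\<integral>s. (norm (h s - m))\<^sup>2 \<partial>P) = (\<integral>s. (norm (h s))\<^sup>2 \<partial>P) - (norm m)\<^sup>2"
    by (simp add: power2_norm_eq_inner)
  then show "(\<integral>s. (norm (h s - (\<integral>s. h s \<partial>P)))\<^sup>2 \<partial>P) = (\<integral>s. (norm (h s))\<^sup>2 \<partial>P) - (norm (\<integral>s. h s \<partial>P))\<^sup>2"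
    by (simp add: m_def)
  have "0 \<le> (\<integral>s. (norm (h s - m))\<^sup>2 \<partial>P)" by (intro integral_nonneg_AE) auto
  with * show "(norm (\<integral>s. h s \<partial>P))\<^sup>2 \<le> (\<integral>s. (norm (h s))\<^sup>2 \<partial>P)" by (simp add: m_def)
  from * show "(\<integral>s. (norm (h s - (\<integral>s. h s \<partial>P)))\<^sup>2 \<partial>P) \<le> (\<integral>s. (norm (h s))\<^sup>2 \<partial>P)"
    by (simp add: m_def)
qed

lemma r4: "((a::real) + b + c + d)\<^sup>2 \<le> 4 * (a\<^sup>2 + b\<^sup>2 + c\<^sup>2 + d\<^sup>2)"
proof -
  have "0 \<le> (a-b)\<^sup>2 + (a-c)\<^sup>2 + (a-d)\<^sup>2 + (b-c)\<^sup>2 + (b-d)\<^sup>2 + (c-d)\<^sup>2" by simp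
  then show ?thesis by (simp add: power2_eq_square algebra_simps)
qed

lemma r3: "((a::real) + b + c)\<^sup>2 \<le> 3 * (a\<^sup>2 + b\<^sup>2 + c\<^sup>2)"
proof -
  have "0 \<le> (a-b)\<^sup>2 + (a-c)\<^sup>2 + (b-c)\<^sup>2" by simp
  then show ?thesis by (simp add: power2_eq_square algebra_simps)
qed

lemma r2: "((a::real) + b)\<^sup>2 \<le> 2 * (a\<^sup>2 + b\<^sup>2)"
proof -
  have "0 \<le> (a-b)\<^sup>2" by simp
  then show ?thesis by (simp add: power2_eq_square algebra_simps)
qed

lemma sq4: "(norm ((a::'v::real_normed_vector) + b + c + d))\<^sup>2 \<le> 4 * ((norm a)\<^sup>2 + (norm b)\<^sup>2 + (norm c)\<^sup>2 + (norm d)\<^sup>2)"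
proof -
  have "norm (a + b + c + d) \<le> norm a + norm b + norm c + norm d"
    by (smt (verit) norm_triangle_ineq)
  then have "(norm (a + b + c + d))\<^sup>2 \<le> (norm a + norm b + norm c + norm d)\<^sup>2"
    by (intro power_mono) auto
  also have "\<dots> \<le> 4 * ((norm a)\<^sup>2 + (norm b)\<^sup>2 + (norm c)\<^sup>2 + (norm d)\<^sup>2)"
    by (rule r4)
  finally show ?thesis .
qed

lemma sq3: "(norm ((a::'v::real_normed_vector) + b + c))\<^sup>2 \<le> 3 * ((norm a)\<^sup>2 + (norm b)\<^sup>2 + (norm c)\<^sup>2)"
proof -
  have "norm (a + b + c) \<le> norm a + norm b + norm c"
    by (smt (verit) norm_triangle_ineq)
  then have "(norm (a + b + c))\<^sup>2 \<le> (norm a + norm b + norm c)\<^sup>2"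
    by (intro power_mono) auto
  also have "\<dots> \<le> 3 * ((norm a)\<^sup>2 + (norm b)\<^sup>2 + (norm c)\<^sup>2)"
    by (rule r3)
  finally show ?thesis .
qed

lemma sq2: "(norm ((a::'v::real_normed_vector) + b))\<^sup>2 \<le> 2 * ((norm a)\<^sup>2 + (norm b)\<^sup>2)"
proof -
  have "norm (a + b) \<le> norm a + norm b"
    by (rule norm_triangle_ineq)
  then have "(norm (a + b))\<^sup>2 \<le> (norm a + norm b)\<^sup>2"
    by (intro power_mono) auto
  also have "\<dots> \<le> 2 * ((norm a)\<^sup>2 + (norm b)\<^sup>2)"
    by (rule r2)
  finally show ?thesis .
qed

lemma proj_normal:
  fixes X :: "'a::euclidean_space set"
  assumes X: "convex X" "closed X" "X \<noteq> {}" and c: "0 < c"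
  shows "(1 / c) *\<^sub>R (p - closest_point X p) \<in> normal_cone X (closest_point X p)"
proof -
  have "closest_point X p \<in> X" using X closest_point_in_set by blast
  moreover have "inner ((1 / c) *\<^sub>R (p - closest_point X p)) (w - closest_point X p) \<le> 0" if "w \<in> X" for w
    using closest_point_dot[OF X(1,2) that, of p] c by (simp add: divide_nonpos_pos)
  ultimately show ?thesis unfolding normal_cone_def by auto
qed

lemma PBx:
  fixes X :: "'a::euclidean_space set"
  assumes X: "convex X" "closed X" "X \<noteq> {}" and ax: "0 < ax"
    and x': "x' = closest_point X (x - ax *\<^sub>R (G + r *\<^sub>R (x - z)))"
  shows "(infdist 0 ((\<lambda>v. F' + v) ` normal_cone X x'))\<^sup>2
     \<le> 4 * (norm (F' - F))\<^sup>2 + 4 * (norm (G - F))\<^sup>2 + (4 / ax\<^sup>2 + 8 * r\<^sup>2) * (norm (x' - x))\<^sup>2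
        + 8 * r\<^sup>2 * (norm (x' - z))\<^sup>2"
proof -
  define p where "p = x - ax *\<^sub>R (G + r *\<^sub>R (x - z))"
  define v where "v = (1 / ax) *\<^sub>R (p - x')"
  have v: "v \<in> normal_cone X x'" unfolding v_def x' p_def by (rule proj_normal[OF X ax])
  have "infdist 0 ((\<lambda>v. F' + v) ` normal_cone X x') \<le> dist 0 (F' + v)"
    using v by (intro infdist_le) auto
  then have "(infdist 0 ((\<lambda>v. F' + v) ` normal_cone X x'))\<^sup>2 \<le> (norm (F' + v))\<^sup>2"
    by (intro power_mono) (auto simp: infdist_nonneg)
  also have "F' + v = (F' - F) + (F - G) + (1 / ax) *\<^sub>R (x - x') + (- r) *\<^sub>R (x - z)"
    using ax by (simp add: v_def p_def algebra_simps)
  also have "(norm \<dots>)\<^sup>2 \<le> 4 * ((norm (F' - F))\<^sup>2 + (norm (F - G))\<^sup>2 + (norm ((1 / ax) *\<^sub>R (x - x')))\<^sup>2 + (norm ((- r) *\<^sub>R (x - z)))\<^sup>2)"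
    by (rule sq4)
  also have "(norm ((1 / ax) *\<^sub>R (x - x')))\<^sup>2 = (1 / ax\<^sup>2) * (norm (x' - x))\<^sup>2"
    using ax by (simp add: power_mult_distrib norm_minus_commute power_divide)
  also have "(norm ((- r) *\<^sub>R (x - z)))\<^sup>2 = r\<^sup>2 * (norm ((x - x') + (x' - z)))\<^sup>2"
    by (simp add: power_mult_distrib)
  also have "\<dots> \<le> r\<^sup>2 * (2 * ((norm (x' - x))\<^sup>2 + (norm (x' - z))\<^sup>2))"
    using sq2[of "x - x'" "x' - z"] by (intro mult_left_mono) (auto simp: norm_minus_commute)
  also have "norm (F - G) = norm (G - F)" by (rule norm_minus_commute)
  finally show ?thesis using ax by (simp add: algebra_simps)
qed

lemma PBy:
  fixes Y :: "'b::euclidean_space set"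
  assumes Y: "convex Y" "closed Y" "Y \<noteq> {}" and ay: "0 < ay"
    and y': "y' = closest_point Y (y + ay *\<^sub>R G)"
  shows "(infdist 0 ((\<lambda>v. - F' + v) ` normal_cone Y y'))\<^sup>2
     \<le> 3 * (norm (F' - F))\<^sup>2 + 3 * (norm (G - F))\<^sup>2 + (3 / ay\<^sup>2) * (norm (y' - y))\<^sup>2"
proof -
  define p where "p = y + ay *\<^sub>R G"
  define v where "v = (1 / ay) *\<^sub>R (p - y')"
  have v: "v \<in> normal_cone Y y'" unfolding v_def y' p_def by (rule proj_normal[OF Y ay])
  have "infdist 0 ((\<lambda>v. - F' + v) ` normal_cone Y y') \<le> dist 0 (- F' + v)"
    using v by (intro infdist_le) auto
  then have "(infdist 0 ((\<lambda>v. - F' + v) ` normal_cone Y y'))\<^sup>2 \<le> (norm (- F' + v))\<^sup>2"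
    by (intro power_mono) (auto simp: infdist_nonneg)
  also have "- F' + v = (F - F') + (G - F) + (1 / ay) *\<^sub>R (y - y')"
    using ay by (simp add: v_def p_def algebra_simps)
  also have "(norm \<dots>)\<^sup>2 \<le> 3 * ((norm (F - F'))\<^sup>2 + (norm (G - F))\<^sup>2 + (norm ((1 / ay) *\<^sub>R (y - y')))\<^sup>2)"
    by (rule sq3)
  also have "(norm ((1 / ay) *\<^sub>R (y - y')))\<^sup>2 = (1 / ay\<^sup>2) * (norm (y' - y))\<^sup>2"
    using ay by (simp add: power_mult_distrib norm_minus_commute power_divide)
  also have "norm (F - F') = norm (F' - F)" by (rule norm_minus_commute)
  finally show ?thesis using ay by (simp add: algebra_simps)
qed



locale spider =
  fixes X :: "'a::euclidean_space set" and Y :: "'b::euclidean_space set"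
    and P :: "'c measure" and Q :: "'w measure"
    and gx :: "'a \<Rightarrow> 'b \<Rightarrow> 'c \<Rightarrow> 'a" and gy :: "'a \<Rightarrow> 'b \<Rightarrow> 'c \<Rightarrow> 'b"
    and Fx :: "'a \<Rightarrow> 'b \<Rightarrow> 'a" and Fy :: "'a \<Rightarrow> 'b \<Rightarrow> 'b"
    and Lx Ly \<sigma>x \<sigma>y ax ay \<beta> r Cx Cy :: real
    and K T M n0 :: nat
    and \<xi> :: "'w \<Rightarrow> nat \<Rightarrow> nat \<Rightarrow> nat \<Rightarrow> 'c"
    and I :: "(nat \<times> nat \<times> nat) set"
    and smp :: "(nat \<Rightarrow> nat \<Rightarrow> nat \<Rightarrow> 'c) \<Rightarrow> nat \<Rightarrow> nat \<Rightarrow> 'c"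
    and x0 z0 :: 'a and y0 :: 'b
  assumes X: "X \<noteq> {}" "closed X" "convex X"
    and Y: "Y \<noteq> {}" "closed Y" "convex Y" "bounded Y"
    and P: "prob_space P" and Q: "prob_space Q"
    and gx_meas: "(\<lambda>(x, y, s). gx x y s) \<in> borel_measurable (borel \<Otimes>\<^sub>M (borel \<Otimes>\<^sub>M P))"
    and gy_meas: "(\<lambda>(x, y, s). gy x y s) \<in> borel_measurable (borel \<Otimes>\<^sub>M (borel \<Otimes>\<^sub>M P))"
    and gx_sq: "\<And>x y. x \<in> X \<Longrightarrow> y \<in> Y \<Longrightarrow> integrable P (\<lambda>s. (norm (gx x y s))\<^sup>2)"
    and gy_sq: "\<And>x y. x \<in> X \<Longrightarrow> y \<in> Y \<Longrightarrow> integrable P (\<lambda>s. (norm (gy x y s))\<^sup>2)"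
    and Lxx: "\<And>x1 x2 y. x1 \<in> X \<Longrightarrow> x2 \<in> X \<Longrightarrow> y \<in> Y \<Longrightarrow>
                 (\<integral>s. (norm (gx x1 y s - gx x2 y s))\<^sup>2 \<partial>P) \<le> Lx\<^sup>2 * (norm (x1 - x2))\<^sup>2"
    and Lxy: "\<And>x y1 y2. x \<in> X \<Longrightarrow> y1 \<in> Y \<Longrightarrow> y2 \<in> Y \<Longrightarrow>
                 (\<integral>s. (norm (gx x y1 s - gx x y2 s))\<^sup>2 \<partial>P) \<le> Ly\<^sup>2 * (norm (y1 - y2))\<^sup>2"
    and Ly: "\<And>x1 x2 y1 y2. x1 \<in> X \<Longrightarrow> x2 \<in> X \<Longrightarrow> y1 \<in> Y \<Longrightarrow> y2 \<in> Y \<Longrightarrow>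
                 (\<integral>s. (norm (gy x1 y1 s - gy x2 y2 s))\<^sup>2 \<partial>P)
                   \<le> Ly\<^sup>2 * ((norm (x1 - x2))\<^sup>2 + (norm (y1 - y2))\<^sup>2)"
    and unbiased_x: "\<And>x y. x \<in> X \<Longrightarrow> y \<in> Y \<Longrightarrow> (\<integral>s. gx x y s \<partial>P) = Fx x y"
    and unbiased_y: "\<And>x y. x \<in> X \<Longrightarrow> y \<in> Y \<Longrightarrow> (\<integral>s. gy x y s \<partial>P) = Fy x y"
    and var_x: "\<And>x y. x \<in> X \<Longrightarrow> y \<in> Y \<Longrightarrow> (\<integral>s. (norm (gx x y s - Fx x y))\<^sup>2 \<partial>P) \<le> \<sigma>x\<^sup>2"
    and var_y: "\<And>x y. x \<in> X \<Longrightarrow> y \<in> Y \<Longrightarrow> (\<integral>s. (norm (gy x y s - Fy x y))\<^sup>2 \<partial>P) \<le> \<sigma>y\<^sup>2"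
    and params: "0 < ax" "0 < ay" "0 < r" "0 < K" "0 < T" "T = M"
    and start: "x0 \<in> X" "y0 \<in> Y"
    and ind: "prob_space.indep_vars Q (\<lambda>_. P) (\<lambda>(k, \<tau>, i) \<omega>. \<xi> \<omega> k \<tau> i) I"
    and Zd: "\<And>k \<tau> i. (k, \<tau>, i) \<in> I \<Longrightarrow> distr Q P (\<lambda>\<omega>. \<xi> \<omega> k \<tau> i) = P"
    and I_in: "\<And>k \<tau> i. k < K \<Longrightarrow> 0 < \<tau> \<Longrightarrow> \<tau> < T \<Longrightarrow> i < M \<Longrightarrow> (k, \<tau>, i) \<in> I"
    and smp_loc: "\<And>xi xi' k i. k < K \<Longrightarrow> i < n0 \<Longrightarrow> (\<And>i'. (k, 0, i') \<in> I \<Longrightarrow> xi k 0 i' = xi' k 0 i') \<Longrightarrow> smp xi k i = smp xi' k i"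
    and smp_meas: "\<And>A k i. k < K \<Longrightarrow> i < n0 \<Longrightarrow> {j \<in> I. fst j = k \<and> fst (snd j) = 0} \<subseteq> A \<Longrightarrow>
        (\<lambda>u. smp (\<lambda>k \<tau> i. u (k, \<tau>, i)) k i) \<in> measurable (Pi\<^sub>M A (\<lambda>_. P)) P"
    and mode: "(0 < n0 \<and> Cx = \<sigma>x\<^sup>2 / real n0 \<and> Cy = \<sigma>y\<^sup>2 / real n0 \<and> (\<forall>xi k i. smp xi k i = xi k 0 i)
                 \<and> (\<forall>k<K. \<forall>i<n0. (k, 0, i) \<in> I))
             \<or> (Cx = 0 \<and> Cy = 0 \<and> (\<forall>xi k x y. x \<in> X \<longrightarrow> y \<in> Y \<longrightarrow>
                   (1 / real n0) *\<^sub>R (\<Sum>i<n0. gx x y (smp xi k i)) = Fx x y \<and>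
                   (1 / real n0) *\<^sub>R (\<Sum>i<n0. gy x y (smp xi k i)) = Fy x y))"
begin

definition "Z = (\<lambda>(k, \<tau>, i) \<omega>. \<xi> \<omega> k \<tau> i)"
definition "uxi u = (\<lambda>k \<tau> i. u (k, \<tau>, i))"
definition "IN xi k x y = ((1 / real n0) *\<^sub>R (\<Sum>i<n0. gx x y (smp xi k i)),
                           (1 / real n0) *\<^sub>R (\<Sum>i<n0. gy x y (smp xi k i)))"
definition "AL xi = alg X Y ax ay \<beta> r T M gx gy (IN xi) xi x0 y0 z0"
definition "xA xi t = fst (AL xi t)"
definition "yA xi t = fst (snd (AL xi t))"
definition "zA xi t = fst (snd (snd (AL xi t)))"
definition "GxA xi t = fst (snd (snd (snd (AL xi t))))"
definition "GyA xi t = snd (snd (snd (snd (AL xi t))))"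
definition "Pre t = {j \<in> I. fst j * T + fst (snd j) < t}"
definition "Fxi x y = (\<integral>s. gx x y s \<partial>P)"
definition "Fyi x y = (\<integral>s. gy x y s \<partial>P)"

lemma Z_simp[simp]: "Z (k, \<tau>, i) \<omega> = \<xi> \<omega> k \<tau> i" by (simp add: Z_def)
lemma uxi_simp: "uxi u k \<tau> i = u (k, \<tau>, i)" by (simp add: uxi_def)
lemma indZ: "prob_space.indep_vars Q (\<lambda>_. P) Z I" using ind by (simp add: Z_def)
lemma ZdZ: "j \<in> I \<Longrightarrow> distr Q P (Z j) = P" using Zd by (cases j) (auto simp: Z_def)
lemma M_pos: "0 < M" using params by simp

lemma AL_0:
  "xA xi 0 = x0" "yA xi 0 = y0" "zA xi 0 = z0"
  "GxA xi 0 = fst (IN xi 0 x0 y0)" "GyA xi 0 = snd (IN xi 0 x0 y0)"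
  by (simp_all add: xA_def yA_def zA_def GxA_def GyA_def AL_def)

lemma AL_Suc:
  "xA xi (Suc t) = closest_point X (xA xi t - ax *\<^sub>R (GxA xi t + r *\<^sub>R (xA xi t - zA xi t)))"
  "yA xi (Suc t) = closest_point Y (yA xi t + ay *\<^sub>R GyA xi t)"
  "zA xi (Suc t) = zA xi t + \<beta> *\<^sub>R (xA xi (Suc t) - zA xi t)"
  "GxA xi (Suc t) = (if Suc t mod T = 0 then fst (IN xi (Suc t div T) (xA xi (Suc t)) (yA xi (Suc t)))
      else (1 / real M) *\<^sub>R (\<Sum>i<M. gx (xA xi (Suc t)) (yA xi (Suc t)) (xi (Suc t div T) (Suc t mod T) i)
                                   - gx (xA xi t) (yA xi t) (xi (Suc t div T) (Suc t mod T) i)) + GxA xi t)"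
  "GyA xi (Suc t) = (if Suc t mod T = 0 then snd (IN xi (Suc t div T) (xA xi (Suc t)) (yA xi (Suc t)))
      else (1 / real M) *\<^sub>R (\<Sum>i<M. gy (xA xi (Suc t)) (yA xi (Suc t)) (xi (Suc t div T) (Suc t mod T) i)
                                   - gy (xA xi t) (yA xi t) (xi (Suc t div T) (Suc t mod T) i)) + GyA xi t)"
  by (cases "AL xi t"; simp add: xA_def yA_def zA_def GxA_def GyA_def AL_def Let_def)+

lemma inX: "xA xi t \<in> X"
  by (cases t) (auto simp: AL_0 AL_Suc start closest_point_in_set X)
lemma inY: "yA xi t \<in> Y"
  by (cases t) (auto simp: AL_0 AL_Suc start closest_point_in_set Y)

lemma IN_cong:
  assumes k: "k < K" and h: "\<And>i'. (k, 0, i') \<in> I \<Longrightarrow> xi k 0 i' = xi' k 0 i'"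
  shows "IN xi k = IN xi' k"
proof -
  have "smp xi k i = smp xi' k i" if "i \<in> {..<n0}" for i
    using smp_loc[where xi=xi and xi'=xi' and k=k, OF k _ h] that by auto
  then show ?thesis unfolding IN_def fun_eq_iff by (auto intro!: sum.cong)
qed

lemma LOC:
  assumes "t < K * T" "\<And>j. j \<in> Pre (Suc t) \<Longrightarrow> u j = Z j \<omega>"
  shows "AL (uxi u) t = AL (\<xi> \<omega>) t"
  using assms
proof (induction t)
  case 0
  have "IN (uxi u) 0 = IN (\<xi> \<omega>) 0"
    by (rule IN_cong) (use 0(2) params(4) in \<open>auto simp: Pre_def uxi_simp\<close>)
  then show ?case by (simp add: AL_def)
next
  case (Suc t)
  have IH: "AL (uxi u) t = AL (\<xi> \<omega>) t"
    using Suc.prems by (intro Suc.IH) (auto simp: Pre_def)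
  have k: "Suc t div T < K"
    using Suc.prems(1) params by (simp add: less_mult_imp_div_less)
  have IN: "IN (uxi u) (Suc t div T) = IN (\<xi> \<omega>) (Suc t div T)"
  proof (rule IN_cong[OF k])
    fix i' assume "(Suc t div T, 0, i') \<in> I"
    moreover have "Suc t div T * T + 0 < Suc (Suc t)"
      using div_times_less_eq_dividend[of "Suc t" T] by linarith
    ultimately show "uxi u (Suc t div T) 0 i' = \<xi> \<omega> (Suc t div T) 0 i'"
      using Suc.prems(2) by (auto simp: Pre_def uxi_simp)
  qed
  have U: "uxi u (Suc t div T) (Suc t mod T) i = \<xi> \<omega> (Suc t div T) (Suc t mod T) i"
    if "Suc t mod T \<noteq> 0" "i < M" for i
  proof -
    have "(Suc t div T, Suc t mod T, i) \<in> I"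
      using that k params by (intro I_in) auto
    moreover have "Suc t div T * T + Suc t mod T < Suc (Suc t)" by simp
    ultimately show ?thesis using Suc.prems(2) by (auto simp: Pre_def uxi_simp)
  qed
  show ?case
  proof (cases "Suc t mod T = 0")
    case True
    then show ?thesis
      using IH IN by (simp add: AL_def Let_def split: prod.split)
  next
    case False
    then have U': "\<And>i. i \<in> {..<M} \<Longrightarrow> uxi u (Suc t div T) (Suc t mod T) i = \<xi> \<omega> (Suc t div T) (Suc t mod T) i"
      using U by auto
    have S1: "(\<Sum>i<M. gx A B (uxi u (Suc t div T) (Suc t mod T) i) - gx C D (uxi u (Suc t div T) (Suc t mod T) i))
        = (\<Sum>i<M. gx A B (\<xi> \<omega> (Suc t div T) (Suc t mod T) i) - gx C D (\<xi> \<omega> (Suc t div T) (Suc t mod T) i))" for A B C D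
      by (rule sum.cong) (auto simp: U')
    have S2: "(\<Sum>i<M. gy A B (uxi u (Suc t div T) (Suc t mod T) i) - gy C D (uxi u (Suc t div T) (Suc t mod T) i))
        = (\<Sum>i<M. gy A B (\<xi> \<omega> (Suc t div T) (Suc t mod T) i) - gy C D (\<xi> \<omega> (Suc t div T) (Suc t mod T) i))" for A B C D
      by (rule sum.cong) (auto simp: U')
    show ?thesis
      using IH False by (simp add: AL_def Let_def S1 S2 split: prod.split)
  qed
qed

lemma LOCc:
  assumes "t < K * T" "\<And>j. j \<in> Pre (Suc t) \<Longrightarrow> u j = Z j \<omega>"
  shows "xA (uxi u) t = xA (\<xi> \<omega>) t" "yA (uxi u) t = yA (\<xi> \<omega>) t" "zA (uxi u) t = zA (\<xi> \<omega>) t"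
    "GxA (uxi u) t = GxA (\<xi> \<omega>) t" "GyA (uxi u) t = GyA (\<xi> \<omega>) t"
  using LOC[OF assms] by (simp_all add: xA_def yA_def zA_def GxA_def GyA_def)

lemma LOCx:
  assumes "t \<le> K * T" "\<And>j. j \<in> Pre t \<Longrightarrow> u j = Z j \<omega>"
  shows "xA (uxi u) t = xA (\<xi> \<omega>) t" "yA (uxi u) t = yA (\<xi> \<omega>) t" "zA (uxi u) t = zA (\<xi> \<omega>) t"
proof -
  have "xA (uxi u) t = xA (\<xi> \<omega>) t \<and> yA (uxi u) t = yA (\<xi> \<omega>) t \<and> zA (uxi u) t = zA (\<xi> \<omega>) t"
  proof (cases t)
    case 0 then show ?thesis by (simp add: AL_0)
  next
    case (Suc t')
    then have "t' < K * T" using assms(1) by simp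
    from LOCc[OF this] assms(2) Suc show ?thesis by (simp add: AL_Suc)
  qed
  then show "xA (uxi u) t = xA (\<xi> \<omega>) t" "yA (uxi u) t = yA (\<xi> \<omega>) t" "zA (uxi u) t = zA (\<xi> \<omega>) t"
    by auto
qed

end



context spider begin

abbreviation "PA A \<equiv> Pi\<^sub>M A (\<lambda>_. P)"

lemma cpX_meas: "closest_point X \<in> borel_measurable borel"
  by (rule borel_measurable_continuous_onI[OF continuous_on_closest_point[OF X(3) X(2) X(1)]])
lemma cpY_meas: "closest_point Y \<in> borel_measurable borel"
  by (rule borel_measurable_continuous_onI[OF continuous_on_closest_point[OF Y(3) Y(2) Y(1)]])

lemma gx_comp:
  assumes "f \<in> borel_measurable N" "g \<in> borel_measurable N" "h \<in> measurable N P"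
  shows "(\<lambda>u. gx (f u) (g u) (h u)) \<in> borel_measurable N"
  using measurable_compose[OF measurable_Pair[OF assms(1) measurable_Pair[OF assms(2,3)]] gx_meas] by simp
lemma gy_comp:
  assumes "f \<in> borel_measurable N" "g \<in> borel_measurable N" "h \<in> measurable N P"
  shows "(\<lambda>u. gy (f u) (g u) (h u)) \<in> borel_measurable N"
  using measurable_compose[OF measurable_Pair[OF assms(1) measurable_Pair[OF assms(2,3)]] gy_meas] by simp

lemma IN_meas:
  assumes k: "k < K" and A: "{j \<in> I. fst j = k \<and> fst (snd j) = 0} \<subseteq> A"
    and f: "f \<in> borel_measurable (PA A)" and g: "g \<in> borel_measurable (PA A)"
  shows "(\<lambda>u. fst (IN (uxi u) k (f u) (g u))) \<in> borel_measurable (PA A)"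
    and "(\<lambda>u. snd (IN (uxi u) k (f u) (g u))) \<in> borel_measurable (PA A)"
proof -
  have s: "(\<lambda>u. smp (uxi u) k i) \<in> measurable (PA A) P" if "i < n0" for i
    using smp_meas[OF k that A] by (simp add: uxi_def)
  show "(\<lambda>u. fst (IN (uxi u) k (f u) (g u))) \<in> borel_measurable (PA A)"
    unfolding IN_def fst_conv
    by (intro borel_measurable_scaleR borel_measurable_const borel_measurable_sum gx_comp[OF f g] s) auto
  show "(\<lambda>u. snd (IN (uxi u) k (f u) (g u))) \<in> borel_measurable (PA A)"
    unfolding IN_def snd_conv
    by (intro borel_measurable_scaleR borel_measurable_const borel_measurable_sum gy_comp[OF f g] s) auto
qed

lemma MEASN:
  assumes "(\<lambda>u. xA (uxi u) t) \<in> borel_measurable N" "(\<lambda>u. yA (uxi u) t) \<in> borel_measurable N"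
    "(\<lambda>u. zA (uxi u) t) \<in> borel_measurable N" "(\<lambda>u. GxA (uxi u) t) \<in> borel_measurable N"
    "(\<lambda>u. GyA (uxi u) t) \<in> borel_measurable N"
  shows "(\<lambda>u. xA (uxi u) (Suc t)) \<in> borel_measurable N" "(\<lambda>u. yA (uxi u) (Suc t)) \<in> borel_measurable N"
    "(\<lambda>u. zA (uxi u) (Suc t)) \<in> borel_measurable N"
proof -
  show x: "(\<lambda>u. xA (uxi u) (Suc t)) \<in> borel_measurable N"
    unfolding AL_Suc using measurable_compose[OF _ cpX_meas] assms by measurable
  show "(\<lambda>u. yA (uxi u) (Suc t)) \<in> borel_measurable N"
    unfolding AL_Suc using measurable_compose[OF _ cpY_meas] assms by measurable
  show "(\<lambda>u. zA (uxi u) (Suc t)) \<in> borel_measurable N"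
    unfolding AL_Suc(3)[of _ t] using x assms by measurable
qed

lemma MEAS:
  assumes "t < K * T" "Pre (Suc t) \<subseteq> A"
  shows "(\<lambda>u. xA (uxi u) t) \<in> borel_measurable (PA A) \<and> (\<lambda>u. yA (uxi u) t) \<in> borel_measurable (PA A) \<and>
    (\<lambda>u. zA (uxi u) t) \<in> borel_measurable (PA A) \<and> (\<lambda>u. GxA (uxi u) t) \<in> borel_measurable (PA A) \<and>
    (\<lambda>u. GyA (uxi u) t) \<in> borel_measurable (PA A)"
  using assms
proof (induction t)
  case 0
  have A: "{j \<in> I. fst j = 0 \<and> fst (snd j) = 0} \<subseteq> A" using 0(2) by (auto simp: Pre_def)
  show ?case unfolding AL_0 using params by (auto intro!: IN_meas[OF _ A])
next
  case (Suc t)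
  have IH: "(\<lambda>u. xA (uxi u) t) \<in> borel_measurable (PA A) \<and> (\<lambda>u. yA (uxi u) t) \<in> borel_measurable (PA A) \<and>
    (\<lambda>u. zA (uxi u) t) \<in> borel_measurable (PA A) \<and> (\<lambda>u. GxA (uxi u) t) \<in> borel_measurable (PA A) \<and>
    (\<lambda>u. GyA (uxi u) t) \<in> borel_measurable (PA A)"
    using Suc.prems by (intro Suc.IH) (auto simp: Pre_def)
  note N = MEASN[of t "PA A"] IH
  have k: "Suc t div T < K"
    using Suc.prems(1) params by (simp add: less_mult_imp_div_less)
  have G: "(\<lambda>u. GxA (uxi u) (Suc t)) \<in> borel_measurable (PA A) \<and> (\<lambda>u. GyA (uxi u) (Suc t)) \<in> borel_measurable (PA A)"
  proof (cases "Suc t mod T = 0")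
    case True
    have A: "{j \<in> I. fst j = Suc t div T \<and> fst (snd j) = 0} \<subseteq> A"
    proof
      fix j assume j: "j \<in> {j \<in> I. fst j = Suc t div T \<and> fst (snd j) = 0}"
      have "Suc t div T * T + 0 < Suc (Suc t)"
        using div_times_less_eq_dividend[of "Suc t" T] by linarith
      then show "j \<in> A" using j Suc.prems(2) by (auto simp: Pre_def)
    qed
    show ?thesis unfolding AL_Suc(4,5) using True IH N by (auto intro!: IN_meas[OF k A])
  next
    case False
    have c: "(\<lambda>u. u (Suc t div T, Suc t mod T, i)) \<in> measurable (PA A) P" if "i < M" for i
    proof (rule measurable_component_singleton)
      have "(Suc t div T, Suc t mod T, i) \<in> I" using that k False params by (intro I_in) auto
      moreover have "Suc t div T * T + Suc t mod T < Suc (Suc t)" by simp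
      ultimately show "(Suc t div T, Suc t mod T, i) \<in> A" using Suc.prems(2) by (auto simp: Pre_def)
    qed
    show ?thesis unfolding AL_Suc(4,5) using False IH N
      by (auto simp: uxi_simp intro!: borel_measurable_add borel_measurable_scaleR borel_measurable_sum
          borel_measurable_diff gx_comp gy_comp c)
  qed
  show ?case using G N by auto
qed

end



lemma nn_to_real:
  fixes f :: "'w \<Rightarrow> real"
  assumes "f \<in> borel_measurable Q" "\<And>\<omega>. 0 \<le> f \<omega>" "(\<integral>\<^sup>+\<omega>. ennreal (f \<omega>) \<partial>Q) \<le> ennreal c" "0 \<le> c"
  shows "integrable Q f" "(\<integral>\<omega>. f \<omega> \<partial>Q) \<le> c"
proof -
  have "(\<integral>\<^sup>+\<omega>. ennreal (f \<omega>) \<partial>Q) < \<infinity>" using assms(3) by (simp add: le_less_trans)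
  then show i: "integrable Q f" using assms by (intro integrableI_nonneg) auto
  have "ennreal (\<integral>\<omega>. f \<omega> \<partial>Q) \<le> ennreal c"
    using nn_integral_eq_integral[OF i] assms(2,3) by simp
  then show "(\<integral>\<omega>. f \<omega> \<partial>Q) \<le> c" using assms(4) by (simp add: ennreal_le_iff)
qed

context spider begin

definition "SQ f \<longleftrightarrow> f \<in> borel_measurable Q \<and> integrable Q (\<lambda>\<omega>. (norm (f \<omega>))\<^sup>2)"

lemma SQ_le:
  assumes "g \<in> borel_measurable Q" "integrable Q h" "\<And>\<omega>. \<omega> \<in> space Q \<Longrightarrow> (norm (g \<omega>))\<^sup>2 \<le> h \<omega>"
  shows "SQ g"
  unfolding SQ_def
proof
  show "g \<in> borel_measurable Q" by fact
  show "integrable Q (\<lambda>\<omega>. (norm (g \<omega>))\<^sup>2)"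
  proof (rule Bochner_Integration.integrable_bound[OF assms(2)])
    show "(\<lambda>\<omega>. (norm (g \<omega>))\<^sup>2) \<in> borel_measurable Q" using assms(1) by measurable
    show "AE x in Q. norm ((norm (g x))\<^sup>2) \<le> norm (h x)"
    proof (rule AE_I2)
      fix x assume "x \<in> space Q"
      then have "(norm (g x))\<^sup>2 \<le> h x" by (rule assms(3))
      then show "norm ((norm (g x))\<^sup>2) \<le> norm (h x)" by simp
    qed
  qed
qed

lemma SQ_add:
  fixes f g :: "'w \<Rightarrow> 'v::euclidean_space"
  assumes "SQ f" "SQ g" shows "SQ (\<lambda>\<omega>. f \<omega> + g \<omega>)"
proof (rule SQ_le)
  show "(\<lambda>\<omega>. f \<omega> + g \<omega>) \<in> borel_measurable Q" using assms unfolding SQ_def by auto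
  show "integrable Q (\<lambda>\<omega>. 2 * ((norm (f \<omega>))\<^sup>2 + (norm (g \<omega>))\<^sup>2))" using assms unfolding SQ_def by auto
  show "(norm (f \<omega> + g \<omega>))\<^sup>2 \<le> 2 * ((norm (f \<omega>))\<^sup>2 + (norm (g \<omega>))\<^sup>2)" for \<omega> by (rule sq2)
qed

lemma SQ_diff:
  fixes f g :: "'w \<Rightarrow> 'v::euclidean_space"
  assumes "SQ f" "SQ g" shows "SQ (\<lambda>\<omega>. f \<omega> - g \<omega>)"
proof (rule SQ_le)
  show "(\<lambda>\<omega>. f \<omega> - g \<omega>) \<in> borel_measurable Q" using assms unfolding SQ_def by auto
  show "integrable Q (\<lambda>\<omega>. 2 * ((norm (f \<omega>))\<^sup>2 + (norm (g \<omega>))\<^sup>2))" using assms unfolding SQ_def by auto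
  show "(norm (f \<omega> - g \<omega>))\<^sup>2 \<le> 2 * ((norm (f \<omega>))\<^sup>2 + (norm (g \<omega>))\<^sup>2)" for \<omega>
    using sq2[of "f \<omega>" "- g \<omega>"] by simp
qed

lemma SQ_scale:
  fixes f :: "'w \<Rightarrow> 'v::euclidean_space"
  assumes "SQ f" shows "SQ (\<lambda>\<omega>. c *\<^sub>R f \<omega>)"
  using assms unfolding SQ_def by (auto simp: power_mult_distrib)

lemma SQ_const: "SQ (\<lambda>\<omega>. (c::'v::euclidean_space))"
proof -
  interpret Q: prob_space Q by (rule Q)
  show ?thesis unfolding SQ_def by auto
qed

lemma int_sq_diff:
  fixes f g :: "'c \<Rightarrow> 'v::euclidean_space"
  assumes "f \<in> borel_measurable P" "g \<in> borel_measurable P"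
    "integrable P (\<lambda>s. (norm (f s))\<^sup>2)" "integrable P (\<lambda>s. (norm (g s))\<^sup>2)"
  shows "integrable P (\<lambda>s. (norm (f s - g s))\<^sup>2)"
proof (rule Bochner_Integration.integrable_bound[where f="\<lambda>s. 2 * ((norm (f s))\<^sup>2 + (norm (g s))\<^sup>2)"])
  show "integrable P (\<lambda>s. 2 * ((norm (f s))\<^sup>2 + (norm (g s))\<^sup>2))" using assms by auto
  show "(\<lambda>s. (norm (f s - g s))\<^sup>2) \<in> borel_measurable P" using assms by measurable
  show "AE x in P. norm ((norm (f x - g x))\<^sup>2) \<le> norm (2 * ((norm (f x))\<^sup>2 + (norm (g x))\<^sup>2))"
    using sq2[of "f _" "- g _"] by (intro AE_I2) simp
qed

lemma gxP: "x \<in> X \<Longrightarrow> y \<in> Y \<Longrightarrow> gx x y \<in> borel_measurable P"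
  using gx_comp[of "\<lambda>_. x" P "\<lambda>_. y" "\<lambda>s. s"] by simp
lemma gyP: "x \<in> X \<Longrightarrow> y \<in> Y \<Longrightarrow> gy x y \<in> borel_measurable P"
  using gy_comp[of "\<lambda>_. x" P "\<lambda>_. y" "\<lambda>s. s"] by simp
lemma gxI: "x \<in> X \<Longrightarrow> y \<in> Y \<Longrightarrow> integrable P (gx x y)"
  using SQI[OF prob_space.finite_measure[OF P] gxP gx_sq] by auto
lemma gyI: "x \<in> X \<Longrightarrow> y \<in> Y \<Longrightarrow> integrable P (gy x y)"
  using SQI[OF prob_space.finite_measure[OF P] gyP gy_sq] by auto

lemma Fxi_eq: "x \<in> X \<Longrightarrow> y \<in> Y \<Longrightarrow> Fxi x y = Fx x y" using unbiased_x by (simp add: Fxi_def)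
lemma Fyi_eq: "x \<in> X \<Longrightarrow> y \<in> Y \<Longrightarrow> Fyi x y = Fy x y" using unbiased_y by (simp add: Fyi_def)

lemma Fxi_comp:
  assumes "f \<in> borel_measurable N" "g \<in> borel_measurable N"
  shows "(\<lambda>u. Fxi (f u) (g u)) \<in> borel_measurable N"
proof -
  interpret P: prob_space P by (rule P)
  have "(\<lambda>p. gx (f (fst p)) (g (fst p)) (snd p)) \<in> borel_measurable (N \<Otimes>\<^sub>M P)"
    using assms by (intro gx_comp) auto
  then show ?thesis unfolding Fxi_def
    by (intro P.borel_measurable_lebesgue_integral[where f="\<lambda>u s. gx (f u) (g u) s"]) (simp add: case_prod_beta')
qed
lemma Fyi_comp:
  assumes "f \<in> borel_measurable N" "g \<in> borel_measurable N"
  shows "(\<lambda>u. Fyi (f u) (g u)) \<in> borel_measurable N"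
proof -
  interpret P: prob_space P by (rule P)
  have "(\<lambda>p. gy (f (fst p)) (g (fst p)) (snd p)) \<in> borel_measurable (N \<Otimes>\<^sub>M P)"
    using assms by (intro gy_comp) auto
  then show ?thesis unfolding Fyi_def
    by (intro P.borel_measurable_lebesgue_integral[where f="\<lambda>u s. gy (f u) (g u) s"]) (simp add: case_prod_beta')
qed

lemma Dx:
  assumes "x1 \<in> X" "x2 \<in> X" "y1 \<in> Y" "y2 \<in> Y"
  shows "integrable P (\<lambda>s. gx x1 y1 s - gx x2 y2 s)"
    "integrable P (\<lambda>s. (norm (gx x1 y1 s - gx x2 y2 s))\<^sup>2)"
    "(\<integral>s. (norm (gx x1 y1 s - gx x2 y2 s))\<^sup>2 \<partial>P) \<le> 2 * Lx\<^sup>2 * (norm (x1 - x2))\<^sup>2 + 2 * Ly\<^sup>2 * (norm (y1 - y2))\<^sup>2"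
    "(\<integral>s. gx x1 y1 s - gx x2 y2 s \<partial>P) = Fxi x1 y1 - Fxi x2 y2"
proof -
  show "integrable P (\<lambda>s. gx x1 y1 s - gx x2 y2 s)" using gxI assms by auto
  show i: "integrable P (\<lambda>s. (norm (gx x1 y1 s - gx x2 y2 s))\<^sup>2)"
    using assms by (intro int_sq_diff gxP gx_sq)
  have ia: "integrable P (\<lambda>s. (norm (gx x1 y1 s - gx x2 y1 s))\<^sup>2)"
    using assms by (intro int_sq_diff gxP gx_sq)
  have ib: "integrable P (\<lambda>s. (norm (gx x2 y1 s - gx x2 y2 s))\<^sup>2)"
    using assms by (intro int_sq_diff gxP gx_sq)
  have "(\<integral>s. (norm (gx x1 y1 s - gx x2 y2 s))\<^sup>2 \<partial>P)
      \<le> (\<integral>s. 2 * ((norm (gx x1 y1 s - gx x2 y1 s))\<^sup>2 + (norm (gx x2 y1 s - gx x2 y2 s))\<^sup>2) \<partial>P)"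
  proof (rule integral_mono[OF i])
    show "integrable P (\<lambda>s. 2 * ((norm (gx x1 y1 s - gx x2 y1 s))\<^sup>2 + (norm (gx x2 y1 s - gx x2 y2 s))\<^sup>2))"
      using ia ib by auto
    fix s
    show "(norm (gx x1 y1 s - gx x2 y2 s))\<^sup>2 \<le> 2 * ((norm (gx x1 y1 s - gx x2 y1 s))\<^sup>2 + (norm (gx x2 y1 s - gx x2 y2 s))\<^sup>2)"
      using sq2[of "gx x1 y1 s - gx x2 y1 s" "gx x2 y1 s - gx x2 y2 s"] by simp
  qed
  also have "\<dots> = 2 * (\<integral>s. (norm (gx x1 y1 s - gx x2 y1 s))\<^sup>2 \<partial>P) + 2 * (\<integral>s. (norm (gx x2 y1 s - gx x2 y2 s))\<^sup>2 \<partial>P)"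
    using ia ib by simp
  also have "\<dots> \<le> 2 * (Lx\<^sup>2 * (norm (x1 - x2))\<^sup>2) + 2 * (Ly\<^sup>2 * (norm (y1 - y2))\<^sup>2)"
    using Lxx[of x1 x2 y1] Lxy[of x2 y1 y2] assms by simp
  finally show "(\<integral>s. (norm (gx x1 y1 s - gx x2 y2 s))\<^sup>2 \<partial>P) \<le> 2 * Lx\<^sup>2 * (norm (x1 - x2))\<^sup>2 + 2 * Ly\<^sup>2 * (norm (y1 - y2))\<^sup>2"
    by simp
  show "(\<integral>s. gx x1 y1 s - gx x2 y2 s \<partial>P) = Fxi x1 y1 - Fxi x2 y2"
    using gxI assms by (simp add: Fxi_def)
qed

lemma Dy:
  assumes "x1 \<in> X" "x2 \<in> X" "y1 \<in> Y" "y2 \<in> Y"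
  shows "integrable P (\<lambda>s. gy x1 y1 s - gy x2 y2 s)"
    "integrable P (\<lambda>s. (norm (gy x1 y1 s - gy x2 y2 s))\<^sup>2)"
    "(\<integral>s. (norm (gy x1 y1 s - gy x2 y2 s))\<^sup>2 \<partial>P) \<le> Ly\<^sup>2 * (norm (x1 - x2))\<^sup>2 + Ly\<^sup>2 * (norm (y1 - y2))\<^sup>2"
    "(\<integral>s. gy x1 y1 s - gy x2 y2 s \<partial>P) = Fyi x1 y1 - Fyi x2 y2"
proof -
  show "integrable P (\<lambda>s. gy x1 y1 s - gy x2 y2 s)" using gyI assms by auto
  show "integrable P (\<lambda>s. (norm (gy x1 y1 s - gy x2 y2 s))\<^sup>2)"
    using assms by (intro int_sq_diff gyP gy_sq)
  show "(\<integral>s. (norm (gy x1 y1 s - gy x2 y2 s))\<^sup>2 \<partial>P) \<le> Ly\<^sup>2 * (norm (x1 - x2))\<^sup>2 + Ly\<^sup>2 * (norm (y1 - y2))\<^sup>2"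
    using Ly[OF assms] by (simp add: algebra_simps)
  show "(\<integral>s. gy x1 y1 s - gy x2 y2 s \<partial>P) = Fyi x1 y1 - Fyi x2 y2"
    using gyI assms by (simp add: Fyi_def)
qed

lemma GBx:
  assumes "x1 \<in> X" "x2 \<in> X" "y1 \<in> Y" "y2 \<in> Y"
  shows "(norm (Fx x1 y1 - Fx x2 y2))\<^sup>2 \<le> 2 * Lx\<^sup>2 * (norm (x1 - x2))\<^sup>2 + 2 * Ly\<^sup>2 * (norm (y1 - y2))\<^sup>2"
  using Jvar(4)[OF P Dx(1,2)[OF assms]] Dx(3,4)[OF assms] assms by (simp add: Fxi_eq)

lemma GBy:
  assumes "x1 \<in> X" "x2 \<in> X" "y1 \<in> Y" "y2 \<in> Y"
  shows "(norm (Fy x1 y1 - Fy x2 y2))\<^sup>2 \<le> Ly\<^sup>2 * (norm (x1 - x2))\<^sup>2 + Ly\<^sup>2 * (norm (y1 - y2))\<^sup>2"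
  using Jvar(4)[OF P Dy(1,2)[OF assms]] Dy(3,4)[OF assms] assms by (simp add: Fyi_eq)

lemma MEASX:
  assumes "t \<le> K * T" "Pre t \<subseteq> A"
  shows "(\<lambda>u. xA (uxi u) t) \<in> borel_measurable (PA A)" "(\<lambda>u. yA (uxi u) t) \<in> borel_measurable (PA A)"
    "(\<lambda>u. zA (uxi u) t) \<in> borel_measurable (PA A)"
proof -
  have "(\<lambda>u. xA (uxi u) t) \<in> borel_measurable (PA A) \<and> (\<lambda>u. yA (uxi u) t) \<in> borel_measurable (PA A) \<and>
    (\<lambda>u. zA (uxi u) t) \<in> borel_measurable (PA A)"
  proof (cases t)
    case 0 then show ?thesis by (simp add: AL_0)
  next
    case (Suc t')
    then have "t' < K * T" using assms by simp
    from MEAS[OF this] assms Suc have "(\<lambda>u. xA (uxi u) t') \<in> borel_measurable (PA A) \<and> (\<lambda>u. yA (uxi u) t') \<in> borel_measurable (PA A) \<and>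
    (\<lambda>u. zA (uxi u) t') \<in> borel_measurable (PA A) \<and> (\<lambda>u. GxA (uxi u) t') \<in> borel_measurable (PA A) \<and>
    (\<lambda>u. GyA (uxi u) t') \<in> borel_measurable (PA A)" by simp
    then show ?thesis using MEASN[of t' "PA A"] Suc by auto
  qed
  then show "(\<lambda>u. xA (uxi u) t) \<in> borel_measurable (PA A)" "(\<lambda>u. yA (uxi u) t) \<in> borel_measurable (PA A)"
    "(\<lambda>u. zA (uxi u) t) \<in> borel_measurable (PA A)" by auto
qed

definition "R A \<omega> = restrict (\<lambda>j. Z j \<omega>) A"

lemma R_meas: "A \<subseteq> I \<Longrightarrow> R A \<in> measurable Q (PA A)"
  unfolding R_def using indZ unfolding prob_space.indep_vars_def[OF Q]
  by (intro measurable_restrict) auto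

lemma xi_R: "B \<subseteq> A \<Longrightarrow> j \<in> B \<Longrightarrow> R A \<omega> j = Z j \<omega>"
  by (auto simp: R_def)

lemma Pre_I: "Pre t \<subseteq> I" by (auto simp: Pre_def)

lemma QM:
  assumes "t < K * T"
  shows "(\<lambda>\<omega>. xA (\<xi> \<omega>) t) \<in> borel_measurable Q" "(\<lambda>\<omega>. yA (\<xi> \<omega>) t) \<in> borel_measurable Q"
    "(\<lambda>\<omega>. zA (\<xi> \<omega>) t) \<in> borel_measurable Q" "(\<lambda>\<omega>. GxA (\<xi> \<omega>) t) \<in> borel_measurable Q"
    "(\<lambda>\<omega>. GyA (\<xi> \<omega>) t) \<in> borel_measurable Q"
proof -
  let ?A = "Pre (Suc t)"
  note m = MEAS[OF assms order_refl]
  note l = LOCc[OF assms, of "R ?A _", OF xi_R[OF order_refl]]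
  show "(\<lambda>\<omega>. xA (\<xi> \<omega>) t) \<in> borel_measurable Q"
    using measurable_compose[OF R_meas[OF Pre_I] conjunct1[OF m]] by (simp add: l)
  show "(\<lambda>\<omega>. yA (\<xi> \<omega>) t) \<in> borel_measurable Q"
    using measurable_compose[OF R_meas[OF Pre_I] conjunct1[OF conjunct2[OF m]]] by (simp add: l)
  show "(\<lambda>\<omega>. zA (\<xi> \<omega>) t) \<in> borel_measurable Q"
    using measurable_compose[OF R_meas[OF Pre_I] conjunct1[OF conjunct2[OF conjunct2[OF m]]]] by (simp add: l)
  show "(\<lambda>\<omega>. GxA (\<xi> \<omega>) t) \<in> borel_measurable Q"
    using measurable_compose[OF R_meas[OF Pre_I] conjunct1[OF conjunct2[OF conjunct2[OF conjunct2[OF m]]]]] by (simp add: l)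
  show "(\<lambda>\<omega>. GyA (\<xi> \<omega>) t) \<in> borel_measurable Q"
    using measurable_compose[OF R_meas[OF Pre_I] conjunct2[OF conjunct2[OF conjunct2[OF conjunct2[OF m]]]]] by (simp add: l)
qed

lemma QMX:
  assumes "t \<le> K * T"
  shows "(\<lambda>\<omega>. xA (\<xi> \<omega>) t) \<in> borel_measurable Q" "(\<lambda>\<omega>. yA (\<xi> \<omega>) t) \<in> borel_measurable Q"
    "(\<lambda>\<omega>. zA (\<xi> \<omega>) t) \<in> borel_measurable Q"
proof -
  let ?A = "Pre t"
  note m = MEASX[OF assms order_refl]
  note l = LOCx[OF assms, of "R ?A _", OF xi_R[OF order_refl]]
  show "(\<lambda>\<omega>. xA (\<xi> \<omega>) t) \<in> borel_measurable Q"
    using measurable_compose[OF R_meas[OF Pre_I] m(1)] by (simp add: l)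
  show "(\<lambda>\<omega>. yA (\<xi> \<omega>) t) \<in> borel_measurable Q"
    using measurable_compose[OF R_meas[OF Pre_I] m(2)] by (simp add: l)
  show "(\<lambda>\<omega>. zA (\<xi> \<omega>) t) \<in> borel_measurable Q"
    using measurable_compose[OF R_meas[OF Pre_I] m(3)] by (simp add: l)
qed

end



lemma sum_minus_const: "(\<Sum>i<n. f i - c) = (\<Sum>i<n. f i) - real n *\<^sub>R (c::'v::real_vector)"
  by (simp add: sum_subtractf sum_constant_scaleR)

lemma spider_alg:
  fixes g1 g0 :: "nat \<Rightarrow> 'v::real_vector"
  assumes "0 < M"
  shows "(G0 - F0) + (1 / real M) *\<^sub>R (\<Sum>i<M. (g1 i - g0 i) - (F1 - F0))
       = ((1 / real M) *\<^sub>R (\<Sum>i<M. g1 i - g0 i) + G0) - F1"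
proof -
  have e: "(\<Sum>i<M. (g1 i - g0 i) - (F1 - F0)) = (\<Sum>i<M. g1 i - g0 i) - real M *\<^sub>R (F1 - F0)"
    by (rule sum_minus_const)
  have c: "(1 / real M) *\<^sub>R (real M *\<^sub>R (F1 - F0)) = F1 - F0" using assms by (simp add: scaleR_scaleR)
  show ?thesis unfolding e scaleR_diff_right c using assms by (simp add: algebra_simps)
qed

lemma spider_alg2:
  fixes g :: "nat \<Rightarrow> 'v::real_vector"
  assumes "0 < n"
  shows "0 + (1 / real n) *\<^sub>R (\<Sum>i<n. g i - F) = (1 / real n) *\<^sub>R (\<Sum>i<n. g i) - F"
proof -
  have e: "(\<Sum>i<n. g i - F) = (\<Sum>i<n. g i) - real n *\<^sub>R F"
    by (simp only: sum_subtractf sum_constant_scaleR card_lessThan)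
  have c: "(1 / real n) *\<^sub>R (real n *\<^sub>R F) = F" using assms by (simp add: scaleR_scaleR)
  show ?thesis unfolding e scaleR_diff_right c using assms by (simp add: algebra_simps)
qed

context spider begin

definition "Vx \<omega> t = (norm (GxA (\<xi> \<omega>) t - Fx (xA (\<xi> \<omega>) t) (yA (\<xi> \<omega>) t)))\<^sup>2"
definition "Vy \<omega> t = (norm (GyA (\<xi> \<omega>) t - Fy (xA (\<xi> \<omega>) t) (yA (\<xi> \<omega>) t)))\<^sup>2"
definition "bx \<omega> t = 2 * Lx\<^sup>2 * (norm (xA (\<xi> \<omega>) (Suc t) - xA (\<xi> \<omega>) t))\<^sup>2
                    + 2 * Ly\<^sup>2 * (norm (yA (\<xi> \<omega>) (Suc t) - yA (\<xi> \<omega>) t))\<^sup>2"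
definition "bY \<omega> t = Ly\<^sup>2 * (norm (xA (\<xi> \<omega>) (Suc t) - xA (\<xi> \<omega>) t))\<^sup>2
                    + Ly\<^sup>2 * (norm (yA (\<xi> \<omega>) (Suc t) - yA (\<xi> \<omega>) t))\<^sup>2"

lemma QFx: "t \<le> K * T \<Longrightarrow> (\<lambda>\<omega>. Fx (xA (\<xi> \<omega>) t) (yA (\<xi> \<omega>) t)) \<in> borel_measurable Q"
  using Fxi_comp[OF QMX(1,2)] by (simp add: Fxi_eq inX inY)
lemma QFy: "t \<le> K * T \<Longrightarrow> (\<lambda>\<omega>. Fy (xA (\<xi> \<omega>) t) (yA (\<xi> \<omega>) t)) \<in> borel_measurable Q"
  using Fyi_comp[OF QMX(1,2)] by (simp add: Fyi_eq inX inY)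

lemma QVx: "t < K * T \<Longrightarrow> (\<lambda>\<omega>. Vx \<omega> t) \<in> borel_measurable Q"
  unfolding Vx_def using QM(4)[of t] QFx[of t] by measurable
lemma QVy: "t < K * T \<Longrightarrow> (\<lambda>\<omega>. Vy \<omega> t) \<in> borel_measurable Q"
  unfolding Vy_def using QM(5)[of t] QFy[of t] by measurable

lemma STEPX:
  assumes t1: "Suc t < K * T" and nz: "Suc t mod T \<noteq> 0"
    and iV: "integrable Q (\<lambda>\<omega>. Vx \<omega> t)" and ib: "integrable Q (\<lambda>\<omega>. bx \<omega> t)"
  shows "integrable Q (\<lambda>\<omega>. Vx \<omega> (Suc t))"
    "(\<integral>\<omega>. Vx \<omega> (Suc t) \<partial>Q) \<le> (\<integral>\<omega>. Vx \<omega> t \<partial>Q) + (1 / real M) * (\<integral>\<omega>. bx \<omega> t \<partial>Q)"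
proof -
  interpret Q: prob_space Q by (rule Q)
  interpret P: prob_space P by (rule P)
  have t: "t < K * T" using t1 by simp
  define A where "A = Pre (Suc t)"
  define k where "k = Suc t div T"
  define \<tau> where "\<tau> = Suc t mod T"
  define X0 where "X0 u = xA (uxi u) t" for u
  define Y0 where "Y0 u = yA (uxi u) t" for u
  define X1 where "X1 u = xA (uxi u) (Suc t)" for u
  define Y1 where "Y1 u = yA (uxi u) (Suc t)" for u
  define a where "a u = GxA (uxi u) t - Fxi (X0 u) (Y0 u)" for u
  define D where "D u s = (gx (X1 u) (Y1 u) s - gx (X0 u) (Y0 u) s) - (Fxi (X1 u) (Y1 u) - Fxi (X0 u) (Y0 u))" for u s
  define bnd where "bnd u = 2 * Lx\<^sup>2 * (norm (X1 u - X0 u))\<^sup>2 + 2 * Ly\<^sup>2 * (norm (Y1 u - Y0 u))\<^sup>2" for u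
  have AI: "A \<subseteq> I" by (simp add: A_def Pre_I)
  have kK: "k < K" using t1 params by (simp add: k_def less_mult_imp_div_less)
  have \<tau>: "0 < \<tau>" "\<tau> < T" using nz params by (auto simp: \<tau>_def)
  have newI: "(k, \<tau>, i) \<in> I" if "i < M" for i using I_in[OF kK \<tau> that] .
  have newA: "(k, \<tau>, i) \<notin> A" for i by (simp add: A_def Pre_def k_def \<tau>_def)
  have inj: "inj (\<lambda>i. (k, \<tau>, i))" by (auto simp: inj_def)
  have dj: "distr Q P (Z (k, \<tau>, i)) = P" if "i < M" for i using ZdZ[OF newI[OF that]] .
  note m = MEAS[OF t, of A, unfolded A_def, OF order_refl, folded A_def]
  have mX0: "X0 \<in> borel_measurable (PA A)" and mY0: "Y0 \<in> borel_measurable (PA A)"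
    and mG: "(\<lambda>u. GxA (uxi u) t) \<in> borel_measurable (PA A)"
    using m unfolding X0_def[abs_def] Y0_def[abs_def] by auto
  have mX1: "X1 \<in> borel_measurable (PA A)" and mY1: "Y1 \<in> borel_measurable (PA A)"
    using MEASX(1,2)[of "Suc t" A] t1 unfolding X1_def[abs_def] Y1_def[abs_def] A_def by auto
  have am: "a \<in> borel_measurable (PA A)"
    unfolding a_def[abs_def] using mG mX0 mY0 by (intro borel_measurable_diff Fxi_comp)
  have Dm: "(\<lambda>p. D (fst p) (snd p)) \<in> borel_measurable (PA A \<Otimes>\<^sub>M P)"
  proof -
    have f: "(\<lambda>p. X0 (fst p)) \<in> borel_measurable (PA A \<Otimes>\<^sub>M P)" "(\<lambda>p. Y0 (fst p)) \<in> borel_measurable (PA A \<Otimes>\<^sub>M P)"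
      "(\<lambda>p. X1 (fst p)) \<in> borel_measurable (PA A \<Otimes>\<^sub>M P)" "(\<lambda>p. Y1 (fst p)) \<in> borel_measurable (PA A \<Otimes>\<^sub>M P)"
      using measurable_compose[OF measurable_fst mX0] measurable_compose[OF measurable_fst mY0]
        measurable_compose[OF measurable_fst mX1] measurable_compose[OF measurable_fst mY1] by auto
    show ?thesis unfolding D_def
      by (intro borel_measurable_diff gx_comp Fxi_comp f measurable_snd)
  qed
  have bm: "bnd \<in> borel_measurable (PA A)"
    unfolding bnd_def[abs_def] using mX0 mX1 mY0 mY1 by measurable
  have XY: "X0 u \<in> X" "X1 u \<in> X" "Y0 u \<in> Y" "Y1 u \<in> Y" for u
    by (simp_all add: X0_def X1_def Y0_def Y1_def inX inY)
  have Deq: "D u = (\<lambda>s. (gx (X1 u) (Y1 u) s - gx (X0 u) (Y0 u) s) - (\<integral>s. gx (X1 u) (Y1 u) s - gx (X0 u) (Y0 u) s \<partial>P))" for u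
    using Dx(4)[OF XY(2,1,4,3)] by (simp add: D_def fun_eq_iff)
  have Di1: "integrable P (D u)" for u
    unfolding Deq using Dx(1)[OF XY(2,1,4,3)] by auto
  have Di2: "integrable P (\<lambda>s. (norm (D u s))\<^sup>2)" for u
    unfolding Deq using Jvar(1)[OF P Dx(1,2)[OF XY(2,1,4,3)]] by simp
  have D0: "(\<integral>s. D u s \<partial>P) = 0" for u
    unfolding Deq using Dx(1)[OF XY(2,1,4,3)] by (simp add: P.prob_space)
  have Db: "(\<integral>s. (norm (D u s))\<^sup>2 \<partial>P) \<le> bnd u" for u
    unfolding Deq bnd_def by (rule order_trans[OF Jvar(3)[OF P Dx(1,2)[OF XY(2,1,4,3)]] Dx(3)[OF XY(2,1,4,3)]])
  have SLr: "(\<integral>\<^sup>+\<omega>. ennreal ((norm (a (R A \<omega>) + (1 / real M) *\<^sub>R (\<Sum>i<M. D (R A \<omega>) (Z (k, \<tau>, i) \<omega>))))\<^sup>2) \<partial>Q)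
       \<le> (\<integral>\<^sup>+\<omega>. ennreal ((norm (a (R A \<omega>)))\<^sup>2 + (1 / real M)\<^sup>2 * real M * bnd (R A \<omega>)) \<partial>Q)"
    unfolding R_def
    by (rule SL[OF Q P indZ AI newI newA inj dj am Dm bm Di1 Di2 D0 Db])
  have pw: "a (R A \<omega>) = GxA (\<xi> \<omega>) t - Fx (xA (\<xi> \<omega>) t) (yA (\<xi> \<omega>) t)"
    "a (R A \<omega>) + (1 / real M) *\<^sub>R (\<Sum>i<M. D (R A \<omega>) (Z (k, \<tau>, i) \<omega>))
       = GxA (\<xi> \<omega>) (Suc t) - Fx (xA (\<xi> \<omega>) (Suc t)) (yA (\<xi> \<omega>) (Suc t))"
    "bnd (R A \<omega>) = bx \<omega> t" for \<omega>
  proof -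
    have l0: "xA (uxi (R A \<omega>)) t = xA (\<xi> \<omega>) t" "yA (uxi (R A \<omega>)) t = yA (\<xi> \<omega>) t"
      "GxA (uxi (R A \<omega>)) t = GxA (\<xi> \<omega>) t"
      using LOCc[OF t, of "R A \<omega>" \<omega>] xi_R[of A A _ \<omega>] by (auto simp: A_def)
    have l1: "xA (uxi (R A \<omega>)) (Suc t) = xA (\<xi> \<omega>) (Suc t)" "yA (uxi (R A \<omega>)) (Suc t) = yA (\<xi> \<omega>) (Suc t)"
      using LOCx[of "Suc t" "R A \<omega>" \<omega>] t1 xi_R[of A A _ \<omega>] by (auto simp: A_def)
    show "a (R A \<omega>) = GxA (\<xi> \<omega>) t - Fx (xA (\<xi> \<omega>) t) (yA (\<xi> \<omega>) t)"
      by (simp add: a_def X0_def Y0_def l0 Fxi_eq inX inY)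
    show "bnd (R A \<omega>) = bx \<omega> t"
      by (simp add: bnd_def bx_def X0_def Y0_def X1_def Y1_def l0 l1)
    have "a (R A \<omega>) + (1 / real M) *\<^sub>R (\<Sum>i<M. D (R A \<omega>) (Z (k, \<tau>, i) \<omega>))
      = (GxA (\<xi> \<omega>) t - Fx (xA (\<xi> \<omega>) t) (yA (\<xi> \<omega>) t)) + (1 / real M) *\<^sub>R (\<Sum>i<M.
          (gx (xA (\<xi> \<omega>) (Suc t)) (yA (\<xi> \<omega>) (Suc t)) (\<xi> \<omega> k \<tau> i) - gx (xA (\<xi> \<omega>) t) (yA (\<xi> \<omega>) t) (\<xi> \<omega> k \<tau> i))
          - (Fx (xA (\<xi> \<omega>) (Suc t)) (yA (\<xi> \<omega>) (Suc t)) - Fx (xA (\<xi> \<omega>) t) (yA (\<xi> \<omega>) t)))"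
      by (simp add: a_def D_def X0_def Y0_def X1_def Y1_def l0 l1 Fxi_eq inX inY)
    also have "\<dots> = GxA (\<xi> \<omega>) (Suc t) - Fx (xA (\<xi> \<omega>) (Suc t)) (yA (\<xi> \<omega>) (Suc t))"
      unfolding spider_alg[OF M_pos] using nz by (simp add: AL_Suc(4)[of _ t] k_def \<tau>_def)
    finally show "a (R A \<omega>) + (1 / real M) *\<^sub>R (\<Sum>i<M. D (R A \<omega>) (Z (k, \<tau>, i) \<omega>))
       = GxA (\<xi> \<omega>) (Suc t) - Fx (xA (\<xi> \<omega>) (Suc t)) (yA (\<xi> \<omega>) (Suc t))" .
  qed
  have "(\<integral>\<^sup>+\<omega>. ennreal (Vx \<omega> (Suc t)) \<partial>Q) \<le> (\<integral>\<^sup>+\<omega>. ennreal (Vx \<omega> t + (1 / real M) * bx \<omega> t) \<partial>Q)"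
  proof -
    have L: "(\<integral>\<^sup>+\<omega>. ennreal ((norm (a (R A \<omega>) + (1 / real M) *\<^sub>R (\<Sum>i<M. D (R A \<omega>) (Z (k, \<tau>, i) \<omega>))))\<^sup>2) \<partial>Q)
      = (\<integral>\<^sup>+\<omega>. ennreal (Vx \<omega> (Suc t)) \<partial>Q)"
      by (rule nn_integral_cong) (simp only: pw(2) Vx_def)
    have Rr: "(\<integral>\<^sup>+\<omega>. ennreal ((norm (a (R A \<omega>)))\<^sup>2 + (1 / real M)\<^sup>2 * real M * bnd (R A \<omega>)) \<partial>Q)
      = (\<integral>\<^sup>+\<omega>. ennreal (Vx \<omega> t + (1 / real M) * bx \<omega> t) \<partial>Q)"
      using M_pos by (intro nn_integral_cong) (simp add: pw(1) pw(3) Vx_def power2_eq_square)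
    show ?thesis using SLr unfolding L Rr .
  qed
  also have "\<dots> = ennreal ((\<integral>\<omega>. Vx \<omega> t \<partial>Q) + (1 / real M) * (\<integral>\<omega>. bx \<omega> t \<partial>Q))"
  proof -
    have nn: "0 \<le> Vx \<omega> t + (1 / real M) * bx \<omega> t" for \<omega> by (simp add: Vx_def bx_def)
    show ?thesis
      by (subst nn_integral_eq_integral) (use iV ib nn in auto)
  qed
  finally have le: "(\<integral>\<^sup>+\<omega>. ennreal (Vx \<omega> (Suc t)) \<partial>Q) \<le> ennreal ((\<integral>\<omega>. Vx \<omega> t \<partial>Q) + (1 / real M) * (\<integral>\<omega>. bx \<omega> t \<partial>Q))" .
  have nn0: "0 \<le> (\<integral>\<omega>. Vx \<omega> t \<partial>Q) + (1 / real M) * (\<integral>\<omega>. bx \<omega> t \<partial>Q)"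
    by (intro add_nonneg_nonneg mult_nonneg_nonneg integral_nonneg_AE) (auto simp: Vx_def bx_def)
  show "integrable Q (\<lambda>\<omega>. Vx \<omega> (Suc t))"
    "(\<integral>\<omega>. Vx \<omega> (Suc t) \<partial>Q) \<le> (\<integral>\<omega>. Vx \<omega> t \<partial>Q) + (1 / real M) * (\<integral>\<omega>. bx \<omega> t \<partial>Q)"
    using nn_to_real[OF QVx[OF t1] _ le nn0] by (auto simp: Vx_def)
qed

lemma STEPY:
  assumes t1: "Suc t < K * T" and nz: "Suc t mod T \<noteq> 0"
    and iV: "integrable Q (\<lambda>\<omega>. Vy \<omega> t)" and ib: "integrable Q (\<lambda>\<omega>. bY \<omega> t)"
  shows "integrable Q (\<lambda>\<omega>. Vy \<omega> (Suc t))"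
    "(\<integral>\<omega>. Vy \<omega> (Suc t) \<partial>Q) \<le> (\<integral>\<omega>. Vy \<omega> t \<partial>Q) + (1 / real M) * (\<integral>\<omega>. bY \<omega> t \<partial>Q)"
proof -
  interpret Q: prob_space Q by (rule Q)
  interpret P: prob_space P by (rule P)
  have t: "t < K * T" using t1 by simp
  define A where "A = Pre (Suc t)"
  define k where "k = Suc t div T"
  define \<tau> where "\<tau> = Suc t mod T"
  define X0 where "X0 u = xA (uxi u) t" for u
  define Y0 where "Y0 u = yA (uxi u) t" for u
  define X1 where "X1 u = xA (uxi u) (Suc t)" for u
  define Y1 where "Y1 u = yA (uxi u) (Suc t)" for u
  define a where "a u = GyA (uxi u) t - Fyi (X0 u) (Y0 u)" for u
  define D where "D u s = (gy (X1 u) (Y1 u) s - gy (X0 u) (Y0 u) s) - (Fyi (X1 u) (Y1 u) - Fyi (X0 u) (Y0 u))" for u s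
  define bnd where "bnd u = Ly\<^sup>2 * (norm (X1 u - X0 u))\<^sup>2 + Ly\<^sup>2 * (norm (Y1 u - Y0 u))\<^sup>2" for u
  have AI: "A \<subseteq> I" by (simp add: A_def Pre_I)
  have kK: "k < K" using t1 params by (simp add: k_def less_mult_imp_div_less)
  have \<tau>: "0 < \<tau>" "\<tau> < T" using nz params by (auto simp: \<tau>_def)
  have newI: "(k, \<tau>, i) \<in> I" if "i < M" for i using I_in[OF kK \<tau> that] .
  have newA: "(k, \<tau>, i) \<notin> A" for i by (simp add: A_def Pre_def k_def \<tau>_def)
  have inj: "inj (\<lambda>i. (k, \<tau>, i))" by (auto simp: inj_def)
  have dj: "distr Q P (Z (k, \<tau>, i)) = P" if "i < M" for i using ZdZ[OF newI[OF that]] .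
  note m = MEAS[OF t, of A, unfolded A_def, OF order_refl, folded A_def]
  have mX0: "X0 \<in> borel_measurable (PA A)" and mY0: "Y0 \<in> borel_measurable (PA A)"
    and mG: "(\<lambda>u. GyA (uxi u) t) \<in> borel_measurable (PA A)"
    using m unfolding X0_def[abs_def] Y0_def[abs_def] by auto
  have mX1: "X1 \<in> borel_measurable (PA A)" and mY1: "Y1 \<in> borel_measurable (PA A)"
    using MEASX(1,2)[of "Suc t" A] t1 unfolding X1_def[abs_def] Y1_def[abs_def] A_def by auto
  have am: "a \<in> borel_measurable (PA A)"
    unfolding a_def[abs_def] using mG mX0 mY0 by (intro borel_measurable_diff Fyi_comp)
  have Dm: "(\<lambda>p. D (fst p) (snd p)) \<in> borel_measurable (PA A \<Otimes>\<^sub>M P)"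
  proof -
    have f: "(\<lambda>p. X0 (fst p)) \<in> borel_measurable (PA A \<Otimes>\<^sub>M P)" "(\<lambda>p. Y0 (fst p)) \<in> borel_measurable (PA A \<Otimes>\<^sub>M P)"
      "(\<lambda>p. X1 (fst p)) \<in> borel_measurable (PA A \<Otimes>\<^sub>M P)" "(\<lambda>p. Y1 (fst p)) \<in> borel_measurable (PA A \<Otimes>\<^sub>M P)"
      using measurable_compose[OF measurable_fst mX0] measurable_compose[OF measurable_fst mY0]
        measurable_compose[OF measurable_fst mX1] measurable_compose[OF measurable_fst mY1] by auto
    show ?thesis unfolding D_def
      by (intro borel_measurable_diff gy_comp Fyi_comp f measurable_snd)
  qed
  have bm: "bnd \<in> borel_measurable (PA A)"
    unfolding bnd_def[abs_def] using mX0 mX1 mY0 mY1 by measurable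
  have XY: "X0 u \<in> X" "X1 u \<in> X" "Y0 u \<in> Y" "Y1 u \<in> Y" for u
    by (simp_all add: X0_def X1_def Y0_def Y1_def inX inY)
  have Deq: "D u = (\<lambda>s. (gy (X1 u) (Y1 u) s - gy (X0 u) (Y0 u) s) - (\<integral>s. gy (X1 u) (Y1 u) s - gy (X0 u) (Y0 u) s \<partial>P))" for u
    using Dy(4)[OF XY(2,1,4,3)] by (simp add: D_def fun_eq_iff)
  have Di1: "integrable P (D u)" for u
    unfolding Deq using Dy(1)[OF XY(2,1,4,3)] by auto
  have Di2: "integrable P (\<lambda>s. (norm (D u s))\<^sup>2)" for u
    unfolding Deq using Jvar(1)[OF P Dy(1,2)[OF XY(2,1,4,3)]] by simp
  have D0: "(\<integral>s. D u s \<partial>P) = 0" for u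
    unfolding Deq using Dy(1)[OF XY(2,1,4,3)] by (simp add: P.prob_space)
  have Db: "(\<integral>s. (norm (D u s))\<^sup>2 \<partial>P) \<le> bnd u" for u
    unfolding Deq bnd_def by (rule order_trans[OF Jvar(3)[OF P Dy(1,2)[OF XY(2,1,4,3)]] Dy(3)[OF XY(2,1,4,3)]])
  have SLr: "(\<integral>\<^sup>+\<omega>. ennreal ((norm (a (R A \<omega>) + (1 / real M) *\<^sub>R (\<Sum>i<M. D (R A \<omega>) (Z (k, \<tau>, i) \<omega>))))\<^sup>2) \<partial>Q)
       \<le> (\<integral>\<^sup>+\<omega>. ennreal ((norm (a (R A \<omega>)))\<^sup>2 + (1 / real M)\<^sup>2 * real M * bnd (R A \<omega>)) \<partial>Q)"
    unfolding R_def
    by (rule SL[OF Q P indZ AI newI newA inj dj am Dm bm Di1 Di2 D0 Db])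
  have pw: "a (R A \<omega>) = GyA (\<xi> \<omega>) t - Fy (xA (\<xi> \<omega>) t) (yA (\<xi> \<omega>) t)"
    "a (R A \<omega>) + (1 / real M) *\<^sub>R (\<Sum>i<M. D (R A \<omega>) (Z (k, \<tau>, i) \<omega>))
       = GyA (\<xi> \<omega>) (Suc t) - Fy (xA (\<xi> \<omega>) (Suc t)) (yA (\<xi> \<omega>) (Suc t))"
    "bnd (R A \<omega>) = bY \<omega> t" for \<omega>
  proof -
    have l0: "xA (uxi (R A \<omega>)) t = xA (\<xi> \<omega>) t" "yA (uxi (R A \<omega>)) t = yA (\<xi> \<omega>) t"
      "GyA (uxi (R A \<omega>)) t = GyA (\<xi> \<omega>) t"
      using LOCc[OF t, of "R A \<omega>" \<omega>] xi_R[of A A _ \<omega>] by (auto simp: A_def)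
    have l1: "xA (uxi (R A \<omega>)) (Suc t) = xA (\<xi> \<omega>) (Suc t)" "yA (uxi (R A \<omega>)) (Suc t) = yA (\<xi> \<omega>) (Suc t)"
      using LOCx[of "Suc t" "R A \<omega>" \<omega>] t1 xi_R[of A A _ \<omega>] by (auto simp: A_def)
    show "a (R A \<omega>) = GyA (\<xi> \<omega>) t - Fy (xA (\<xi> \<omega>) t) (yA (\<xi> \<omega>) t)"
      by (simp add: a_def X0_def Y0_def l0 Fyi_eq inX inY)
    show "bnd (R A \<omega>) = bY \<omega> t"
      by (simp add: bnd_def bY_def X0_def Y0_def X1_def Y1_def l0 l1)
    have "a (R A \<omega>) + (1 / real M) *\<^sub>R (\<Sum>i<M. D (R A \<omega>) (Z (k, \<tau>, i) \<omega>))
      = (GyA (\<xi> \<omega>) t - Fy (xA (\<xi> \<omega>) t) (yA (\<xi> \<omega>) t)) + (1 / real M) *\<^sub>R (\<Sum>i<M.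
          (gy (xA (\<xi> \<omega>) (Suc t)) (yA (\<xi> \<omega>) (Suc t)) (\<xi> \<omega> k \<tau> i) - gy (xA (\<xi> \<omega>) t) (yA (\<xi> \<omega>) t) (\<xi> \<omega> k \<tau> i))
          - (Fy (xA (\<xi> \<omega>) (Suc t)) (yA (\<xi> \<omega>) (Suc t)) - Fy (xA (\<xi> \<omega>) t) (yA (\<xi> \<omega>) t)))"
      by (simp add: a_def D_def X0_def Y0_def X1_def Y1_def l0 l1 Fyi_eq inX inY)
    also have "\<dots> = GyA (\<xi> \<omega>) (Suc t) - Fy (xA (\<xi> \<omega>) (Suc t)) (yA (\<xi> \<omega>) (Suc t))"
      unfolding spider_alg[OF M_pos] using nz by (simp add: AL_Suc(5)[of _ t] k_def \<tau>_def)
    finally show "a (R A \<omega>) + (1 / real M) *\<^sub>R (\<Sum>i<M. D (R A \<omega>) (Z (k, \<tau>, i) \<omega>))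
       = GyA (\<xi> \<omega>) (Suc t) - Fy (xA (\<xi> \<omega>) (Suc t)) (yA (\<xi> \<omega>) (Suc t))" .
  qed
  have "(\<integral>\<^sup>+\<omega>. ennreal (Vy \<omega> (Suc t)) \<partial>Q) \<le> (\<integral>\<^sup>+\<omega>. ennreal (Vy \<omega> t + (1 / real M) * bY \<omega> t) \<partial>Q)"
  proof -
    have L: "(\<integral>\<^sup>+\<omega>. ennreal ((norm (a (R A \<omega>) + (1 / real M) *\<^sub>R (\<Sum>i<M. D (R A \<omega>) (Z (k, \<tau>, i) \<omega>))))\<^sup>2) \<partial>Q)
      = (\<integral>\<^sup>+\<omega>. ennreal (Vy \<omega> (Suc t)) \<partial>Q)"
      by (rule nn_integral_cong) (simp only: pw(2) Vy_def)
    have Rr: "(\<integral>\<^sup>+\<omega>. ennreal ((norm (a (R A \<omega>)))\<^sup>2 + (1 / real M)\<^sup>2 * real M * bnd (R A \<omega>)) \<partial>Q)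
      = (\<integral>\<^sup>+\<omega>. ennreal (Vy \<omega> t + (1 / real M) * bY \<omega> t) \<partial>Q)"
      using M_pos by (intro nn_integral_cong) (simp add: pw(1) pw(3) Vy_def power2_eq_square)
    show ?thesis using SLr unfolding L Rr .
  qed
  also have "\<dots> = ennreal ((\<integral>\<omega>. Vy \<omega> t \<partial>Q) + (1 / real M) * (\<integral>\<omega>. bY \<omega> t \<partial>Q))"
  proof -
    have nn: "0 \<le> Vy \<omega> t + (1 / real M) * bY \<omega> t" for \<omega> by (simp add: Vy_def bY_def)
    show ?thesis
      by (subst nn_integral_eq_integral) (use iV ib nn in auto)
  qed
  finally have le: "(\<integral>\<^sup>+\<omega>. ennreal (Vy \<omega> (Suc t)) \<partial>Q) \<le> ennreal ((\<integral>\<omega>. Vy \<omega> t \<partial>Q) + (1 / real M) * (\<integral>\<omega>. bY \<omega> t \<partial>Q))" .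
  have nn0: "0 \<le> (\<integral>\<omega>. Vy \<omega> t \<partial>Q) + (1 / real M) * (\<integral>\<omega>. bY \<omega> t \<partial>Q)"
    by (intro add_nonneg_nonneg mult_nonneg_nonneg integral_nonneg_AE) (auto simp: Vy_def bY_def)
  show "integrable Q (\<lambda>\<omega>. Vy \<omega> (Suc t))"
    "(\<integral>\<omega>. Vy \<omega> (Suc t) \<partial>Q) \<le> (\<integral>\<omega>. Vy \<omega> t \<partial>Q) + (1 / real M) * (\<integral>\<omega>. bY \<omega> t \<partial>Q)"
    using nn_to_real[OF QVy[OF t1] _ le nn0] by (auto simp: Vy_def)
qed

end



context spider begin

lemma G_epoch:
  "GxA xi (k * T) = fst (IN xi k (xA xi (k * T)) (yA xi (k * T)))"
  "GyA xi (k * T) = snd (IN xi k (xA xi (k * T)) (yA xi (k * T)))"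
proof -
  have "GxA xi (k * T) = fst (IN xi k (xA xi (k * T)) (yA xi (k * T))) \<and>
        GyA xi (k * T) = snd (IN xi k (xA xi (k * T)) (yA xi (k * T)))"
  proof (cases k)
    case 0 then show ?thesis by (simp add: AL_0)
  next
    case (Suc k')
    then obtain s where s: "k * T = Suc s" using params by (metis gr0_conv_Suc mult_pos_pos zero_less_Suc)
    have "Suc s mod T = 0" "Suc s div T = k" using params s[symmetric] by auto
    then show ?thesis unfolding s AL_Suc(4,5) by simp
  qed
  then show "GxA xi (k * T) = fst (IN xi k (xA xi (k * T)) (yA xi (k * T)))"
    "GyA xi (k * T) = snd (IN xi k (xA xi (k * T)) (yA xi (k * T)))" by auto
qed

lemma INITX:
  assumes kK: "k < K"
  shows "integrable Q (\<lambda>\<omega>. Vx \<omega> (k * T))" "(\<integral>\<omega>. Vx \<omega> (k * T) \<partial>Q) \<le> Cx"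
proof -
  interpret Q: prob_space Q by (rule Q)
  interpret P: prob_space P by (rule P)
  have t: "k * T < K * T" using kK params by simp
  have "integrable Q (\<lambda>\<omega>. Vx \<omega> (k * T)) \<and> (\<integral>\<omega>. Vx \<omega> (k * T) \<partial>Q) \<le> Cx"
    using mode
  proof
    assume md: "Cx = 0 \<and> Cy = 0 \<and> (\<forall>xi k x y. x \<in> X \<longrightarrow> y \<in> Y \<longrightarrow>
                   (1 / real n0) *\<^sub>R (\<Sum>i<n0. gx x y (smp xi k i)) = Fx x y \<and>
                   (1 / real n0) *\<^sub>R (\<Sum>i<n0. gy x y (smp xi k i)) = Fy x y)"
    have "Vx \<omega> (k * T) = 0" for \<omega>
      using md inX inY by (simp add: Vx_def G_epoch IN_def)
    then show ?thesis using md by simp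
  next
    assume md: "0 < n0 \<and> Cx = \<sigma>x\<^sup>2 / real n0 \<and> Cy = \<sigma>y\<^sup>2 / real n0 \<and> (\<forall>xi k i. smp xi k i = xi k 0 i)
                 \<and> (\<forall>k<K. \<forall>i<n0. (k, 0, i) \<in> I)"
    define A where "A = Pre (k * T)"
    define X0 where "X0 u = xA (uxi u) (k * T)" for u
    define Y0 where "Y0 u = yA (uxi u) (k * T)" for u
    define D where "D u s = gx (X0 u) (Y0 u) s - Fxi (X0 u) (Y0 u)" for u s
    have AI: "A \<subseteq> I" by (simp add: A_def Pre_I)
    have newI: "(k, 0, i) \<in> I" if "i < n0" for i using md kK that by auto
    have newA: "(k, 0, i) \<notin> A" for i by (simp add: A_def Pre_def)
    have inj: "inj (\<lambda>i. (k, 0::nat, i))" by (auto simp: inj_def)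
    have dj: "distr Q P (Z (k, 0, i)) = P" if "i < n0" for i using ZdZ[OF newI[OF that]] .
    have mX0: "X0 \<in> borel_measurable (PA A)" and mY0: "Y0 \<in> borel_measurable (PA A)"
      using MEASX(1,2)[of "k * T" A] t unfolding X0_def[abs_def] Y0_def[abs_def] A_def by auto
    have am: "(\<lambda>u. 0::'a) \<in> borel_measurable (PA A)" by simp
    have Dm: "(\<lambda>p. D (fst p) (snd p)) \<in> borel_measurable (PA A \<Otimes>\<^sub>M P)"
    proof -
      have f: "(\<lambda>p. X0 (fst p)) \<in> borel_measurable (PA A \<Otimes>\<^sub>M P)" "(\<lambda>p. Y0 (fst p)) \<in> borel_measurable (PA A \<Otimes>\<^sub>M P)"
        using measurable_compose[OF measurable_fst mX0] measurable_compose[OF measurable_fst mY0] by auto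
      show ?thesis unfolding D_def
        by (intro borel_measurable_diff gx_comp Fxi_comp f measurable_snd)
    qed
    have bm: "(\<lambda>u. \<sigma>x\<^sup>2) \<in> borel_measurable (PA A)" by simp
    have XY: "X0 u \<in> X" "Y0 u \<in> Y" for u
      by (simp_all add: X0_def Y0_def inX inY)
    have Deq: "D u = (\<lambda>s. gx (X0 u) (Y0 u) s - (\<integral>s. gx (X0 u) (Y0 u) s \<partial>P))" for u
      by (simp add: D_def Fxi_def fun_eq_iff)
    have Di1: "integrable P (D u)" for u
      unfolding Deq using gxI[OF XY] by auto
    have Di2: "integrable P (\<lambda>s. (norm (D u s))\<^sup>2)" for u
      unfolding Deq using Jvar(1)[OF P gxI[OF XY] gx_sq[OF XY]] by simp
    have D0: "(\<integral>s. D u s \<partial>P) = 0" for u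
      unfolding Deq using gxI[OF XY] by (simp add: P.prob_space)
    have Db: "(\<integral>s. (norm (D u s))\<^sup>2 \<partial>P) \<le> \<sigma>x\<^sup>2" for u
      using var_x[OF XY] by (simp add: D_def Fxi_eq[OF XY])
    have SLr: "(\<integral>\<^sup>+\<omega>. ennreal ((norm ((\<lambda>u. 0::'a) (R A \<omega>) + (1 / real n0) *\<^sub>R (\<Sum>i<n0. D (R A \<omega>) (Z (k, 0, i) \<omega>))))\<^sup>2) \<partial>Q)
       \<le> (\<integral>\<^sup>+\<omega>. ennreal ((norm ((\<lambda>u. 0::'a) (R A \<omega>)))\<^sup>2 + (1 / real n0)\<^sup>2 * real n0 * (\<lambda>u. \<sigma>x\<^sup>2) (R A \<omega>)) \<partial>Q)"
      unfolding R_def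
      by (rule SL[OF Q P indZ AI newI newA inj dj am Dm bm Di1 Di2 D0 Db])
    have pw: "(0::'a) + (1 / real n0) *\<^sub>R (\<Sum>i<n0. D (R A \<omega>) (Z (k, 0, i) \<omega>))
       = GxA (\<xi> \<omega>) (k * T) - Fx (xA (\<xi> \<omega>) (k * T)) (yA (\<xi> \<omega>) (k * T))" for \<omega>
    proof -
      have l0: "xA (uxi (R A \<omega>)) (k * T) = xA (\<xi> \<omega>) (k * T)" "yA (uxi (R A \<omega>)) (k * T) = yA (\<xi> \<omega>) (k * T)"
        using LOCx[of "k * T" "R A \<omega>" \<omega>] t xi_R[of A A _ \<omega>] by (auto simp: A_def)
      have "(0::'a) + (1 / real n0) *\<^sub>R (\<Sum>i<n0. D (R A \<omega>) (Z (k, 0, i) \<omega>))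
         = 0 + (1 / real n0) *\<^sub>R (\<Sum>i<n0. gx (xA (\<xi> \<omega>) (k * T)) (yA (\<xi> \<omega>) (k * T)) (\<xi> \<omega> k 0 i)
              - Fx (xA (\<xi> \<omega>) (k * T)) (yA (\<xi> \<omega>) (k * T)))"
        by (simp add: D_def X0_def Y0_def l0 Fxi_eq inX inY)
      also have "\<dots> = GxA (\<xi> \<omega>) (k * T) - Fx (xA (\<xi> \<omega>) (k * T)) (yA (\<xi> \<omega>) (k * T))"
        unfolding spider_alg2[OF conjunct1[OF md]] using md by (simp add: G_epoch IN_def)
      finally show ?thesis .
    qed
    have L: "(\<integral>\<^sup>+\<omega>. ennreal ((norm ((\<lambda>u. 0::'a) (R A \<omega>) + (1 / real n0) *\<^sub>R (\<Sum>i<n0. D (R A \<omega>) (Z (k, 0, i) \<omega>))))\<^sup>2) \<partial>Q)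
      = (\<integral>\<^sup>+\<omega>. ennreal (Vx \<omega> (k * T)) \<partial>Q)"
      by (rule nn_integral_cong) (simp only: pw Vx_def)
    have Rr: "(\<integral>\<^sup>+\<omega>. ennreal ((norm ((\<lambda>u. 0::'a) (R A \<omega>)))\<^sup>2 + (1 / real n0)\<^sup>2 * real n0 * (\<lambda>u. \<sigma>x\<^sup>2) (R A \<omega>)) \<partial>Q)
      = ennreal Cx"
      using md by (simp add: power2_eq_square Q.emeasure_space_1)
    have le: "(\<integral>\<^sup>+\<omega>. ennreal (Vx \<omega> (k * T)) \<partial>Q) \<le> ennreal Cx" using SLr unfolding L Rr .
    show ?thesis using nn_to_real[OF QVx[OF t] _ le] md by (auto simp: Vx_def)
  qed
  then show "integrable Q (\<lambda>\<omega>. Vx \<omega> (k * T))" "(\<integral>\<omega>. Vx \<omega> (k * T) \<partial>Q) \<le> Cx" by auto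
qed

lemma INITY:
  assumes kK: "k < K"
  shows "integrable Q (\<lambda>\<omega>. Vy \<omega> (k * T))" "(\<integral>\<omega>. Vy \<omega> (k * T) \<partial>Q) \<le> Cy"
proof -
  interpret Q: prob_space Q by (rule Q)
  interpret P: prob_space P by (rule P)
  have t: "k * T < K * T" using kK params by simp
  have "integrable Q (\<lambda>\<omega>. Vy \<omega> (k * T)) \<and> (\<integral>\<omega>. Vy \<omega> (k * T) \<partial>Q) \<le> Cy"
    using mode
  proof
    assume md: "Cx = 0 \<and> Cy = 0 \<and> (\<forall>xi k x y. x \<in> X \<longrightarrow> y \<in> Y \<longrightarrow>
                   (1 / real n0) *\<^sub>R (\<Sum>i<n0. gx x y (smp xi k i)) = Fx x y \<and>
                   (1 / real n0) *\<^sub>R (\<Sum>i<n0. gy x y (smp xi k i)) = Fy x y)"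
    have "Vy \<omega> (k * T) = 0" for \<omega>
      using md inX inY by (simp add: Vy_def G_epoch IN_def)
    then show ?thesis using md by simp
  next
    assume md: "0 < n0 \<and> Cx = \<sigma>x\<^sup>2 / real n0 \<and> Cy = \<sigma>y\<^sup>2 / real n0 \<and> (\<forall>xi k i. smp xi k i = xi k 0 i)
                 \<and> (\<forall>k<K. \<forall>i<n0. (k, 0, i) \<in> I)"
    define A where "A = Pre (k * T)"
    define X0 where "X0 u = xA (uxi u) (k * T)" for u
    define Y0 where "Y0 u = yA (uxi u) (k * T)" for u
    define D where "D u s = gy (X0 u) (Y0 u) s - Fyi (X0 u) (Y0 u)" for u s
    have AI: "A \<subseteq> I" by (simp add: A_def Pre_I)
    have newI: "(k, 0, i) \<in> I" if "i < n0" for i using md kK that by auto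
    have newA: "(k, 0, i) \<notin> A" for i by (simp add: A_def Pre_def)
    have inj: "inj (\<lambda>i. (k, 0::nat, i))" by (auto simp: inj_def)
    have dj: "distr Q P (Z (k, 0, i)) = P" if "i < n0" for i using ZdZ[OF newI[OF that]] .
    have mX0: "X0 \<in> borel_measurable (PA A)" and mY0: "Y0 \<in> borel_measurable (PA A)"
      using MEASX(1,2)[of "k * T" A] t unfolding X0_def[abs_def] Y0_def[abs_def] A_def by auto
    have am: "(\<lambda>u. 0::'b) \<in> borel_measurable (PA A)" by simp
    have Dm: "(\<lambda>p. D (fst p) (snd p)) \<in> borel_measurable (PA A \<Otimes>\<^sub>M P)"
    proof -
      have f: "(\<lambda>p. X0 (fst p)) \<in> borel_measurable (PA A \<Otimes>\<^sub>M P)" "(\<lambda>p. Y0 (fst p)) \<in> borel_measurable (PA A \<Otimes>\<^sub>M P)"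
        using measurable_compose[OF measurable_fst mX0] measurable_compose[OF measurable_fst mY0] by auto
      show ?thesis unfolding D_def
        by (intro borel_measurable_diff gy_comp Fyi_comp f measurable_snd)
    qed
    have bm: "(\<lambda>u. \<sigma>y\<^sup>2) \<in> borel_measurable (PA A)" by simp
    have XY: "X0 u \<in> X" "Y0 u \<in> Y" for u
      by (simp_all add: X0_def Y0_def inX inY)
    have Deq: "D u = (\<lambda>s. gy (X0 u) (Y0 u) s - (\<integral>s. gy (X0 u) (Y0 u) s \<partial>P))" for u
      by (simp add: D_def Fyi_def fun_eq_iff)
    have Di1: "integrable P (D u)" for u
      unfolding Deq using gyI[OF XY] by auto
    have Di2: "integrable P (\<lambda>s. (norm (D u s))\<^sup>2)" for u
      unfolding Deq using Jvar(1)[OF P gyI[OF XY] gy_sq[OF XY]] by simp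
    have D0: "(\<integral>s. D u s \<partial>P) = 0" for u
      unfolding Deq using gyI[OF XY] by (simp add: P.prob_space)
    have Db: "(\<integral>s. (norm (D u s))\<^sup>2 \<partial>P) \<le> \<sigma>y\<^sup>2" for u
      using var_y[OF XY] by (simp add: D_def Fyi_eq[OF XY])
    have SLr: "(\<integral>\<^sup>+\<omega>. ennreal ((norm ((\<lambda>u. 0::'b) (R A \<omega>) + (1 / real n0) *\<^sub>R (\<Sum>i<n0. D (R A \<omega>) (Z (k, 0, i) \<omega>))))\<^sup>2) \<partial>Q)
       \<le> (\<integral>\<^sup>+\<omega>. ennreal ((norm ((\<lambda>u. 0::'b) (R A \<omega>)))\<^sup>2 + (1 / real n0)\<^sup>2 * real n0 * (\<lambda>u. \<sigma>y\<^sup>2) (R A \<omega>)) \<partial>Q)"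
      unfolding R_def
      by (rule SL[OF Q P indZ AI newI newA inj dj am Dm bm Di1 Di2 D0 Db])
    have pw: "(0::'b) + (1 / real n0) *\<^sub>R (\<Sum>i<n0. D (R A \<omega>) (Z (k, 0, i) \<omega>))
       = GyA (\<xi> \<omega>) (k * T) - Fy (xA (\<xi> \<omega>) (k * T)) (yA (\<xi> \<omega>) (k * T))" for \<omega>
    proof -
      have l0: "xA (uxi (R A \<omega>)) (k * T) = xA (\<xi> \<omega>) (k * T)" "yA (uxi (R A \<omega>)) (k * T) = yA (\<xi> \<omega>) (k * T)"
        using LOCx[of "k * T" "R A \<omega>" \<omega>] t xi_R[of A A _ \<omega>] by (auto simp: A_def)
      have "(0::'b) + (1 / real n0) *\<^sub>R (\<Sum>i<n0. D (R A \<omega>) (Z (k, 0, i) \<omega>))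
         = 0 + (1 / real n0) *\<^sub>R (\<Sum>i<n0. gy (xA (\<xi> \<omega>) (k * T)) (yA (\<xi> \<omega>) (k * T)) (\<xi> \<omega> k 0 i)
              - Fy (xA (\<xi> \<omega>) (k * T)) (yA (\<xi> \<omega>) (k * T)))"
        by (simp add: D_def X0_def Y0_def l0 Fyi_eq inX inY)
      also have "\<dots> = GyA (\<xi> \<omega>) (k * T) - Fy (xA (\<xi> \<omega>) (k * T)) (yA (\<xi> \<omega>) (k * T))"
        unfolding spider_alg2[OF conjunct1[OF md]] using md by (simp add: G_epoch IN_def)
      finally show ?thesis .
    qed
    have L: "(\<integral>\<^sup>+\<omega>. ennreal ((norm ((\<lambda>u. 0::'b) (R A \<omega>) + (1 / real n0) *\<^sub>R (\<Sum>i<n0. D (R A \<omega>) (Z (k, 0, i) \<omega>))))\<^sup>2) \<partial>Q)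
      = (\<integral>\<^sup>+\<omega>. ennreal (Vy \<omega> (k * T)) \<partial>Q)"
      by (rule nn_integral_cong) (simp only: pw Vy_def)
    have Rr: "(\<integral>\<^sup>+\<omega>. ennreal ((norm ((\<lambda>u. 0::'b) (R A \<omega>)))\<^sup>2 + (1 / real n0)\<^sup>2 * real n0 * (\<lambda>u. \<sigma>y\<^sup>2) (R A \<omega>)) \<partial>Q)
      = ennreal Cy"
      using md by (simp add: power2_eq_square Q.emeasure_space_1)
    have le: "(\<integral>\<^sup>+\<omega>. ennreal (Vy \<omega> (k * T)) \<partial>Q) \<le> ennreal Cy" using SLr unfolding L Rr .
    show ?thesis using nn_to_real[OF QVy[OF t] _ le] md by (auto simp: Vy_def)
  qed
  then show "integrable Q (\<lambda>\<omega>. Vy \<omega> (k * T))" "(\<integral>\<omega>. Vy \<omega> (k * T) \<partial>Q) \<le> Cy" by auto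
qed

end



context spider begin

lemma SQ_int: "SQ f \<Longrightarrow> integrable Q (\<lambda>\<omega>. (norm (f \<omega>))\<^sup>2)" by (simp add: SQ_def)

lemma SQy: assumes "t \<le> K * T" shows "SQ (\<lambda>\<omega>. yA (\<xi> \<omega>) t)"
proof -
  interpret Q: prob_space Q by (rule Q)
  obtain B where B: "\<And>y. y \<in> Y \<Longrightarrow> norm y \<le> B" using Y(4) by (auto simp: bounded_iff)
  show ?thesis
  proof (rule SQ_le[where h="\<lambda>_. B\<^sup>2"])
    show "(\<lambda>\<omega>. yA (\<xi> \<omega>) t) \<in> borel_measurable Q" using QMX(2)[OF assms] .
    show "integrable Q (\<lambda>_. B\<^sup>2)" by simp
    show "(norm (yA (\<xi> \<omega>) t))\<^sup>2 \<le> B\<^sup>2" for \<omega> using B[OF inY] by (intro power_mono) auto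
  qed
qed

lemma SQFx:
  assumes t: "t \<le> K * T" and sx: "SQ (\<lambda>\<omega>. xA (\<xi> \<omega>) t)"
  shows "SQ (\<lambda>\<omega>. Fx (xA (\<xi> \<omega>) t) (yA (\<xi> \<omega>) t))" "SQ (\<lambda>\<omega>. Fy (xA (\<xi> \<omega>) t) (yA (\<xi> \<omega>) t))"
proof -
  have dx: "SQ (\<lambda>\<omega>. xA (\<xi> \<omega>) t - x0)" by (intro SQ_diff sx SQ_const)
  have dy: "SQ (\<lambda>\<omega>. yA (\<xi> \<omega>) t - y0)" by (intro SQ_diff SQy[OF t] SQ_const)
  interpret Q: prob_space Q by (rule Q)
  note ix = SQ_int[OF dx] and iy = SQ_int[OF dy]
  show "SQ (\<lambda>\<omega>. Fx (xA (\<xi> \<omega>) t) (yA (\<xi> \<omega>) t))"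
  proof (rule SQ_le[where h="\<lambda>\<omega>. 2 * (norm (Fx x0 y0))\<^sup>2 + 4 * Lx\<^sup>2 * (norm (xA (\<xi> \<omega>) t - x0))\<^sup>2 + 4 * Ly\<^sup>2 * (norm (yA (\<xi> \<omega>) t - y0))\<^sup>2"])
    show "(\<lambda>\<omega>. Fx (xA (\<xi> \<omega>) t) (yA (\<xi> \<omega>) t)) \<in> borel_measurable Q" using QFx[OF t] .
    show "integrable Q (\<lambda>\<omega>. 2 * (norm (Fx x0 y0))\<^sup>2 + 4 * Lx\<^sup>2 * (norm (xA (\<xi> \<omega>) t - x0))\<^sup>2 + 4 * Ly\<^sup>2 * (norm (yA (\<xi> \<omega>) t - y0))\<^sup>2)"
      using ix iy by (intro Bochner_Integration.integrable_add integrable_mult_right) (auto simp: Q.integrable_const)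
    fix \<omega>
    have "(norm (Fx (xA (\<xi> \<omega>) t) (yA (\<xi> \<omega>) t)))\<^sup>2 \<le> 2 * ((norm (Fx x0 y0))\<^sup>2 + (norm (Fx (xA (\<xi> \<omega>) t) (yA (\<xi> \<omega>) t) - Fx x0 y0))\<^sup>2)"
      using sq2[of "Fx x0 y0" "Fx (xA (\<xi> \<omega>) t) (yA (\<xi> \<omega>) t) - Fx x0 y0"] by simp
    also have "\<dots> \<le> 2 * ((norm (Fx x0 y0))\<^sup>2 + (2 * Lx\<^sup>2 * (norm (xA (\<xi> \<omega>) t - x0))\<^sup>2 + 2 * Ly\<^sup>2 * (norm (yA (\<xi> \<omega>) t - y0))\<^sup>2))"
      using GBx[OF inX start(1) inY start(2)] by (intro mult_left_mono add_left_mono) auto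
    finally show "(norm (Fx (xA (\<xi> \<omega>) t) (yA (\<xi> \<omega>) t)))\<^sup>2 \<le> 2 * (norm (Fx x0 y0))\<^sup>2 + 4 * Lx\<^sup>2 * (norm (xA (\<xi> \<omega>) t - x0))\<^sup>2 + 4 * Ly\<^sup>2 * (norm (yA (\<xi> \<omega>) t - y0))\<^sup>2"
      by simp
  qed
  show "SQ (\<lambda>\<omega>. Fy (xA (\<xi> \<omega>) t) (yA (\<xi> \<omega>) t))"
  proof (rule SQ_le[where h="\<lambda>\<omega>. 2 * (norm (Fy x0 y0))\<^sup>2 + 2 * Ly\<^sup>2 * (norm (xA (\<xi> \<omega>) t - x0))\<^sup>2 + 2 * Ly\<^sup>2 * (norm (yA (\<xi> \<omega>) t - y0))\<^sup>2"])
    show "(\<lambda>\<omega>. Fy (xA (\<xi> \<omega>) t) (yA (\<xi> \<omega>) t)) \<in> borel_measurable Q" using QFy[OF t] .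
    show "integrable Q (\<lambda>\<omega>. 2 * (norm (Fy x0 y0))\<^sup>2 + 2 * Ly\<^sup>2 * (norm (xA (\<xi> \<omega>) t - x0))\<^sup>2 + 2 * Ly\<^sup>2 * (norm (yA (\<xi> \<omega>) t - y0))\<^sup>2)"
      using ix iy by (intro Bochner_Integration.integrable_add integrable_mult_right) (auto simp: Q.integrable_const)
    fix \<omega>
    have "(norm (Fy (xA (\<xi> \<omega>) t) (yA (\<xi> \<omega>) t)))\<^sup>2 \<le> 2 * ((norm (Fy x0 y0))\<^sup>2 + (norm (Fy (xA (\<xi> \<omega>) t) (yA (\<xi> \<omega>) t) - Fy x0 y0))\<^sup>2)"
      using sq2[of "Fy x0 y0" "Fy (xA (\<xi> \<omega>) t) (yA (\<xi> \<omega>) t) - Fy x0 y0"] by simp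
    also have "\<dots> \<le> 2 * ((norm (Fy x0 y0))\<^sup>2 + (Ly\<^sup>2 * (norm (xA (\<xi> \<omega>) t - x0))\<^sup>2 + Ly\<^sup>2 * (norm (yA (\<xi> \<omega>) t - y0))\<^sup>2))"
      using GBy[OF inX start(1) inY start(2)] by (intro mult_left_mono add_left_mono) auto
    finally show "(norm (Fy (xA (\<xi> \<omega>) t) (yA (\<xi> \<omega>) t)))\<^sup>2 \<le> 2 * (norm (Fy x0 y0))\<^sup>2 + 2 * Ly\<^sup>2 * (norm (xA (\<xi> \<omega>) t - x0))\<^sup>2 + 2 * Ly\<^sup>2 * (norm (yA (\<xi> \<omega>) t - y0))\<^sup>2"
      by simp
  qed
qed

lemma SQ_all:
  assumes "t \<le> K * T"
  shows "SQ (\<lambda>\<omega>. xA (\<xi> \<omega>) t) \<and> SQ (\<lambda>\<omega>. zA (\<xi> \<omega>) t) \<and>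
         (t < K * T \<longrightarrow> integrable Q (\<lambda>\<omega>. Vx \<omega> t) \<and> integrable Q (\<lambda>\<omega>. Vy \<omega> t))"
  using assms
proof (induction t)
  case 0
  have "integrable Q (\<lambda>\<omega>. Vx \<omega> (0 * T))" "integrable Q (\<lambda>\<omega>. Vy \<omega> (0 * T))"
    using INITX(1)[of 0] INITY(1)[of 0] params by auto
  then show ?case by (simp add: AL_0 SQ_const)
next
  case (Suc t)
  have t: "t < K * T" using Suc.prems by simp
  have IH: "SQ (\<lambda>\<omega>. xA (\<xi> \<omega>) t)" "SQ (\<lambda>\<omega>. zA (\<xi> \<omega>) t)"
    "integrable Q (\<lambda>\<omega>. Vx \<omega> t)" "integrable Q (\<lambda>\<omega>. Vy \<omega> t)"
    using Suc.IH t by auto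
  have Fxs: "SQ (\<lambda>\<omega>. Fx (xA (\<xi> \<omega>) t) (yA (\<xi> \<omega>) t))" "SQ (\<lambda>\<omega>. Fy (xA (\<xi> \<omega>) t) (yA (\<xi> \<omega>) t))"
    using SQFx[OF _ IH(1)] t by auto
  have GFx: "SQ (\<lambda>\<omega>. GxA (\<xi> \<omega>) t - Fx (xA (\<xi> \<omega>) t) (yA (\<xi> \<omega>) t))"
    unfolding SQ_def using QM(4)[OF t] QFx[of t] t IH(3) unfolding Vx_def by auto
  have GFy: "SQ (\<lambda>\<omega>. GyA (\<xi> \<omega>) t - Fy (xA (\<xi> \<omega>) t) (yA (\<xi> \<omega>) t))"
    unfolding SQ_def using QM(5)[OF t] QFy[of t] t IH(4) unfolding Vy_def by auto
  have Gx: "SQ (\<lambda>\<omega>. GxA (\<xi> \<omega>) t)" using SQ_add[OF GFx Fxs(1)] by simp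
  have Gy: "SQ (\<lambda>\<omega>. GyA (\<xi> \<omega>) t)" using SQ_add[OF GFy Fxs(2)] by simp
  interpret Q: prob_space Q by (rule Q)
  define p where "p \<omega> = xA (\<xi> \<omega>) t - ax *\<^sub>R (GxA (\<xi> \<omega>) t + r *\<^sub>R (xA (\<xi> \<omega>) t - zA (\<xi> \<omega>) t))" for \<omega>
  have sp: "SQ (\<lambda>\<omega>. p \<omega> - x0)" unfolding p_def
    by (intro SQ_diff SQ_add SQ_scale IH Gx SQ_const)
  have sx: "SQ (\<lambda>\<omega>. xA (\<xi> \<omega>) (Suc t))"
  proof (rule SQ_le[where h="\<lambda>\<omega>. 2 * ((norm x0)\<^sup>2 + (norm (p \<omega> - x0))\<^sup>2)"])
    show "(\<lambda>\<omega>. xA (\<xi> \<omega>) (Suc t)) \<in> borel_measurable Q" using QMX(1)[OF Suc.prems] .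
    show "integrable Q (\<lambda>\<omega>. 2 * ((norm x0)\<^sup>2 + (norm (p \<omega> - x0))\<^sup>2))"
      using SQ_int[OF sp] by (auto simp: Q.integrable_const)
    fix \<omega>
    have "norm (xA (\<xi> \<omega>) (Suc t) - x0) \<le> norm (p \<omega> - x0)"
      using closest_point_lipschitz[OF X(3) X(2) X(1), of "p \<omega>" x0] closest_point_self[OF start(1)]
      by (simp add: AL_Suc(1) p_def dist_norm)
    then have "norm (xA (\<xi> \<omega>) (Suc t)) \<le> norm x0 + norm (p \<omega> - x0)"
      using norm_triangle_ineq[of x0 "xA (\<xi> \<omega>) (Suc t) - x0"] by simp
    then have "(norm (xA (\<xi> \<omega>) (Suc t)))\<^sup>2 \<le> (norm x0 + norm (p \<omega> - x0))\<^sup>2"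
      by (intro power_mono) auto
    also have "\<dots> \<le> 2 * ((norm x0)\<^sup>2 + (norm (p \<omega> - x0))\<^sup>2)" by (rule r2)
    finally show "(norm (xA (\<xi> \<omega>) (Suc t)))\<^sup>2 \<le> 2 * ((norm x0)\<^sup>2 + (norm (p \<omega> - x0))\<^sup>2)" .
  qed
  have sz: "SQ (\<lambda>\<omega>. zA (\<xi> \<omega>) (Suc t))"
    unfolding AL_Suc(3)[of _ t] by (intro SQ_add SQ_scale SQ_diff IH sx)
  have V: "integrable Q (\<lambda>\<omega>. Vx \<omega> (Suc t)) \<and> integrable Q (\<lambda>\<omega>. Vy \<omega> (Suc t))" if t1: "Suc t < K * T"
  proof (cases "Suc t mod T = 0")
    case True
    define k where "k = Suc t div T"
    have kT: "k * T = Suc t" using True div_mult_mod_eq[of "Suc t" T] by (simp add: k_def)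
    have kK: "k < K" using t1 params by (simp add: k_def less_mult_imp_div_less)
    show ?thesis using INITX(1)[OF kK] INITY(1)[OF kK] unfolding kT by auto
  next
    case False
    have ddx: "SQ (\<lambda>\<omega>. xA (\<xi> \<omega>) (Suc t) - xA (\<xi> \<omega>) t)" by (intro SQ_diff sx IH)
    have ddy: "SQ (\<lambda>\<omega>. yA (\<xi> \<omega>) (Suc t) - yA (\<xi> \<omega>) t)" using Suc.prems t by (intro SQ_diff SQy) auto
    have ib: "integrable Q (\<lambda>\<omega>. bx \<omega> t)" "integrable Q (\<lambda>\<omega>. bY \<omega> t)"
      unfolding bx_def bY_def using SQ_int[OF ddx] SQ_int[OF ddy] by auto
    show ?thesis using STEPX(1)[OF t1 False IH(3) ib(1)] STEPY(1)[OF t1 False IH(4) ib(2)] by auto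
  qed
  show ?case using sx sz V by auto
qed

lemma INTS:
  assumes t: "t < K * T"
  shows "integrable Q (\<lambda>\<omega>. (norm (xA (\<xi> \<omega>) (Suc t) - xA (\<xi> \<omega>) t))\<^sup>2)"
    "integrable Q (\<lambda>\<omega>. (norm (yA (\<xi> \<omega>) (Suc t) - yA (\<xi> \<omega>) t))\<^sup>2)"
    "integrable Q (\<lambda>\<omega>. (norm (xA (\<xi> \<omega>) (Suc t) - zA (\<xi> \<omega>) t))\<^sup>2)"
    "integrable Q (\<lambda>\<omega>. Vx \<omega> t)" "integrable Q (\<lambda>\<omega>. Vy \<omega> t)"
    "integrable Q (\<lambda>\<omega>. bx \<omega> t)" "integrable Q (\<lambda>\<omega>. bY \<omega> t)"
proof -
  have a: "SQ (\<lambda>\<omega>. xA (\<xi> \<omega>) t)" "SQ (\<lambda>\<omega>. zA (\<xi> \<omega>) t)"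
    "integrable Q (\<lambda>\<omega>. Vx \<omega> t)" "integrable Q (\<lambda>\<omega>. Vy \<omega> t)"
    using SQ_all[of t] t by auto
  have b: "SQ (\<lambda>\<omega>. xA (\<xi> \<omega>) (Suc t))" using SQ_all[of "Suc t"] t by auto
  have ddx: "SQ (\<lambda>\<omega>. xA (\<xi> \<omega>) (Suc t) - xA (\<xi> \<omega>) t)" by (intro SQ_diff a b)
  have ddy: "SQ (\<lambda>\<omega>. yA (\<xi> \<omega>) (Suc t) - yA (\<xi> \<omega>) t)" using t by (intro SQ_diff SQy) auto
  have dxz: "SQ (\<lambda>\<omega>. xA (\<xi> \<omega>) (Suc t) - zA (\<xi> \<omega>) t)" by (intro SQ_diff a b)
  show "integrable Q (\<lambda>\<omega>. (norm (xA (\<xi> \<omega>) (Suc t) - xA (\<xi> \<omega>) t))\<^sup>2)"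
    "integrable Q (\<lambda>\<omega>. (norm (yA (\<xi> \<omega>) (Suc t) - yA (\<xi> \<omega>) t))\<^sup>2)"
    "integrable Q (\<lambda>\<omega>. (norm (xA (\<xi> \<omega>) (Suc t) - zA (\<xi> \<omega>) t))\<^sup>2)"
    using SQ_int[OF ddx] SQ_int[OF ddy] SQ_int[OF dxz] by auto
  show "integrable Q (\<lambda>\<omega>. Vx \<omega> t)" "integrable Q (\<lambda>\<omega>. Vy \<omega> t)" using a by auto
  show "integrable Q (\<lambda>\<omega>. bx \<omega> t)" "integrable Q (\<lambda>\<omega>. bY \<omega> t)"
    unfolding bx_def bY_def using SQ_int[OF ddx] SQ_int[OF ddy] by auto
qed

lemma VLx:
  assumes k: "k < K" and \<tau>: "\<tau> < T"
  shows "(\<integral>\<omega>. Vx \<omega> (k * T + \<tau>) \<partial>Q) \<le> Cx + (1 / real M) * (\<Sum>s<\<tau>. \<integral>\<omega>. bx \<omega> (k * T + s) \<partial>Q)"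
  using \<tau>
proof (induction \<tau>)
  case 0
  show ?case using INITX(2)[OF k] by simp
next
  case (Suc \<tau>)
  have t1: "Suc (k * T + \<tau>) < K * T"
  proof -
    have "k * T + T \<le> K * T" using k by (metis add.commute mult_Suc less_eq_Suc_le mult_le_mono1)
    then show ?thesis using Suc.prems by simp
  qed
  have nz: "Suc (k * T + \<tau>) mod T \<noteq> 0"
  proof -
    have "Suc (k * T + \<tau>) mod T = Suc \<tau>" using Suc.prems by simp
    then show ?thesis by simp
  qed
  have t: "k * T + \<tau> < K * T" using t1 by simp
  note I = INTS[OF t]
  have "(\<integral>\<omega>. Vx \<omega> (k * T + Suc \<tau>) \<partial>Q) \<le> (\<integral>\<omega>. Vx \<omega> (k * T + \<tau>) \<partial>Q) + (1 / real M) * (\<integral>\<omega>. bx \<omega> (k * T + \<tau>) \<partial>Q)"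
    using STEPX(2)[OF t1 nz I(4) I(6)] by simp
  also have "\<dots> \<le> Cx + (1 / real M) * (\<Sum>s<\<tau>. \<integral>\<omega>. bx \<omega> (k * T + s) \<partial>Q) + (1 / real M) * (\<integral>\<omega>. bx \<omega> (k * T + \<tau>) \<partial>Q)"
    using Suc.IH Suc.prems by simp
  finally show ?case by (simp add: algebra_simps)
qed

lemma VLy:
  assumes k: "k < K" and \<tau>: "\<tau> < T"
  shows "(\<integral>\<omega>. Vy \<omega> (k * T + \<tau>) \<partial>Q) \<le> Cy + (1 / real M) * (\<Sum>s<\<tau>. \<integral>\<omega>. bY \<omega> (k * T + s) \<partial>Q)"
  using \<tau>
proof (induction \<tau>)
  case 0
  show ?case using INITY(2)[OF k] by simp
next
  case (Suc \<tau>)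
  have t1: "Suc (k * T + \<tau>) < K * T"
  proof -
    have "k * T + T \<le> K * T" using k by (metis add.commute mult_Suc less_eq_Suc_le mult_le_mono1)
    then show ?thesis using Suc.prems by simp
  qed
  have nz: "Suc (k * T + \<tau>) mod T \<noteq> 0"
  proof -
    have "Suc (k * T + \<tau>) mod T = Suc \<tau>" using Suc.prems by simp
    then show ?thesis by simp
  qed
  have t: "k * T + \<tau> < K * T" using t1 by simp
  note I = INTS[OF t]
  have "(\<integral>\<omega>. Vy \<omega> (k * T + Suc \<tau>) \<partial>Q) \<le> (\<integral>\<omega>. Vy \<omega> (k * T + \<tau>) \<partial>Q) + (1 / real M) * (\<integral>\<omega>. bY \<omega> (k * T + \<tau>) \<partial>Q)"
    using STEPY(2)[OF t1 nz I(5) I(7)] by simp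
  also have "\<dots> \<le> Cy + (1 / real M) * (\<Sum>s<\<tau>. \<integral>\<omega>. bY \<omega> (k * T + s) \<partial>Q) + (1 / real M) * (\<integral>\<omega>. bY \<omega> (k * T + \<tau>) \<partial>Q)"
    using Suc.IH Suc.prems by simp
  finally show ?case by (simp add: algebra_simps)
qed

end



lemma int_le:
  fixes f g :: "'w \<Rightarrow> real"
  assumes "integrable Q g" "\<And>\<omega>. 0 \<le> f \<omega>" "\<And>\<omega>. f \<omega> \<le> g \<omega>"
  shows "(\<integral>\<omega>. f \<omega> \<partial>Q) \<le> (\<integral>\<omega>. g \<omega> \<partial>Q)"
proof (cases "integrable Q f")
  case True then show ?thesis using assms by (intro integral_mono) auto
next
  case False
  then have "(\<integral>\<omega>. f \<omega> \<partial>Q) = 0" by (rule not_integrable_integral_eq)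
  moreover have "0 \<le> (\<integral>\<omega>. g \<omega> \<partial>Q)" using assms by (intro integral_nonneg_AE) (auto intro: order_trans)
  ultimately show ?thesis by simp
qed

context spider begin

definition "LX \<omega> t = (infdist 0 ((\<lambda>v. Fx (xA (\<xi> \<omega>) t) (yA (\<xi> \<omega>) t) + v) ` normal_cone X (xA (\<xi> \<omega>) t)))\<^sup>2"
definition "LY \<omega> t = (infdist 0 ((\<lambda>v. - Fy (xA (\<xi> \<omega>) t) (yA (\<xi> \<omega>) t) + v) ` normal_cone Y (yA (\<xi> \<omega>) t)))\<^sup>2"
definition "ex t = (\<integral>\<omega>. (norm (xA (\<xi> \<omega>) (Suc t) - xA (\<xi> \<omega>) t))\<^sup>2 \<partial>Q)"
definition "ey t = (\<integral>\<omega>. (norm (yA (\<xi> \<omega>) (Suc t) - yA (\<xi> \<omega>) t))\<^sup>2 \<partial>Q)"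
definition "exz t = (\<integral>\<omega>. (norm (xA (\<xi> \<omega>) (Suc t) - zA (\<xi> \<omega>) t))\<^sup>2 \<partial>Q)"
definition "vx t = (\<integral>\<omega>. Vx \<omega> t \<partial>Q)"
definition "vy t = (\<integral>\<omega>. Vy \<omega> t \<partial>Q)"

lemma PWx:
  "LX \<omega> (Suc t) \<le> (4 / ax\<^sup>2 + 8 * Lx\<^sup>2 + 8 * r\<^sup>2) * (norm (xA (\<xi> \<omega>) (Suc t) - xA (\<xi> \<omega>) t))\<^sup>2
     + 8 * Ly\<^sup>2 * (norm (yA (\<xi> \<omega>) (Suc t) - yA (\<xi> \<omega>) t))\<^sup>2
     + 8 * r\<^sup>2 * (norm (xA (\<xi> \<omega>) (Suc t) - zA (\<xi> \<omega>) t))\<^sup>2 + 4 * Vx \<omega> t"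
proof -
  have "LX \<omega> (Suc t) \<le> 4 * (norm (Fx (xA (\<xi> \<omega>) (Suc t)) (yA (\<xi> \<omega>) (Suc t)) - Fx (xA (\<xi> \<omega>) t) (yA (\<xi> \<omega>) t)))\<^sup>2
      + 4 * (norm (GxA (\<xi> \<omega>) t - Fx (xA (\<xi> \<omega>) t) (yA (\<xi> \<omega>) t)))\<^sup>2
      + (4 / ax\<^sup>2 + 8 * r\<^sup>2) * (norm (xA (\<xi> \<omega>) (Suc t) - xA (\<xi> \<omega>) t))\<^sup>2
      + 8 * r\<^sup>2 * (norm (xA (\<xi> \<omega>) (Suc t) - zA (\<xi> \<omega>) t))\<^sup>2"
    unfolding LX_def by (rule PBx[OF X(3) X(2) X(1) params(1) AL_Suc(1)])
  moreover have "(norm (Fx (xA (\<xi> \<omega>) (Suc t)) (yA (\<xi> \<omega>) (Suc t)) - Fx (xA (\<xi> \<omega>) t) (yA (\<xi> \<omega>) t)))\<^sup>2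
      \<le> 2 * Lx\<^sup>2 * (norm (xA (\<xi> \<omega>) (Suc t) - xA (\<xi> \<omega>) t))\<^sup>2 + 2 * Ly\<^sup>2 * (norm (yA (\<xi> \<omega>) (Suc t) - yA (\<xi> \<omega>) t))\<^sup>2"
    by (rule GBx[OF inX inX inY inY])
  ultimately show ?thesis unfolding Vx_def by (simp add: algebra_simps)
qed

lemma PWy:
  "LY \<omega> (Suc t) \<le> (3 / ay\<^sup>2 + 3 * Ly\<^sup>2) * (norm (yA (\<xi> \<omega>) (Suc t) - yA (\<xi> \<omega>) t))\<^sup>2
     + 3 * Ly\<^sup>2 * (norm (xA (\<xi> \<omega>) (Suc t) - xA (\<xi> \<omega>) t))\<^sup>2 + 3 * Vy \<omega> t"
proof -
  have "LY \<omega> (Suc t) \<le> 3 * (norm (Fy (xA (\<xi> \<omega>) (Suc t)) (yA (\<xi> \<omega>) (Suc t)) - Fy (xA (\<xi> \<omega>) t) (yA (\<xi> \<omega>) t)))\<^sup>2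
      + 3 * (norm (GyA (\<xi> \<omega>) t - Fy (xA (\<xi> \<omega>) t) (yA (\<xi> \<omega>) t)))\<^sup>2
      + (3 / ay\<^sup>2) * (norm (yA (\<xi> \<omega>) (Suc t) - yA (\<xi> \<omega>) t))\<^sup>2"
    unfolding LY_def by (rule PBy[OF Y(3) Y(2) Y(1) params(2) AL_Suc(2)])
  moreover have "(norm (Fy (xA (\<xi> \<omega>) (Suc t)) (yA (\<xi> \<omega>) (Suc t)) - Fy (xA (\<xi> \<omega>) t) (yA (\<xi> \<omega>) t)))\<^sup>2
      \<le> Ly\<^sup>2 * (norm (xA (\<xi> \<omega>) (Suc t) - xA (\<xi> \<omega>) t))\<^sup>2 + Ly\<^sup>2 * (norm (yA (\<xi> \<omega>) (Suc t) - yA (\<xi> \<omega>) t))\<^sup>2"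
    by (rule GBy[OF inX inX inY inY])
  ultimately show ?thesis unfolding Vy_def by (simp add: algebra_simps)
qed

lemma ILX:
  assumes t: "t < K * T"
  shows "(\<integral>\<omega>. LX \<omega> (Suc t) \<partial>Q) \<le> (4 / ax\<^sup>2 + 8 * Lx\<^sup>2 + 8 * r\<^sup>2) * ex t + 8 * Ly\<^sup>2 * ey t + 8 * r\<^sup>2 * exz t + 4 * vx t"
proof -
  note I = INTS[OF t]
  have "(\<integral>\<omega>. LX \<omega> (Suc t) \<partial>Q) \<le> (\<integral>\<omega>. (4 / ax\<^sup>2 + 8 * Lx\<^sup>2 + 8 * r\<^sup>2) * (norm (xA (\<xi> \<omega>) (Suc t) - xA (\<xi> \<omega>) t))\<^sup>2
     + 8 * Ly\<^sup>2 * (norm (yA (\<xi> \<omega>) (Suc t) - yA (\<xi> \<omega>) t))\<^sup>2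
     + 8 * r\<^sup>2 * (norm (xA (\<xi> \<omega>) (Suc t) - zA (\<xi> \<omega>) t))\<^sup>2 + 4 * Vx \<omega> t \<partial>Q)"
    using I by (intro int_le PWx) (auto simp: LX_def)
  also have "\<dots> = (4 / ax\<^sup>2 + 8 * Lx\<^sup>2 + 8 * r\<^sup>2) * ex t + 8 * Ly\<^sup>2 * ey t + 8 * r\<^sup>2 * exz t + 4 * vx t"
    using I by (simp add: ex_def ey_def exz_def vx_def)
  finally show ?thesis .
qed

lemma ILY:
  assumes t: "t < K * T"
  shows "(\<integral>\<omega>. LY \<omega> (Suc t) \<partial>Q) \<le> (3 / ay\<^sup>2 + 3 * Ly\<^sup>2) * ey t + 3 * Ly\<^sup>2 * ex t + 3 * vy t"
proof -
  note I = INTS[OF t]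
  have "(\<integral>\<omega>. LY \<omega> (Suc t) \<partial>Q) \<le> (\<integral>\<omega>. (3 / ay\<^sup>2 + 3 * Ly\<^sup>2) * (norm (yA (\<xi> \<omega>) (Suc t) - yA (\<xi> \<omega>) t))\<^sup>2
     + 3 * Ly\<^sup>2 * (norm (xA (\<xi> \<omega>) (Suc t) - xA (\<xi> \<omega>) t))\<^sup>2 + 3 * Vy \<omega> t \<partial>Q)"
    using I by (intro int_le PWy) (auto simp: LY_def)
  also have "\<dots> = (3 / ay\<^sup>2 + 3 * Ly\<^sup>2) * ey t + 3 * Ly\<^sup>2 * ex t + 3 * vy t"
    using I by (simp add: ex_def ey_def vy_def)
  finally show ?thesis .
qed

lemma Ibx: "t < K * T \<Longrightarrow> (\<integral>\<omega>. bx \<omega> t \<partial>Q) = 2 * Lx\<^sup>2 * ex t + 2 * Ly\<^sup>2 * ey t"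
  using INTS(1,2)[of t] by (simp add: bx_def ex_def ey_def)
lemma Iby: "t < K * T \<Longrightarrow> (\<integral>\<omega>. bY \<omega> t \<partial>Q) = Ly\<^sup>2 * ex t + Ly\<^sup>2 * ey t"
  using INTS(1,2)[of t] by (simp add: bY_def ex_def ey_def)

lemma ex_nn: "0 \<le> ex t" "0 \<le> ey t" "0 \<le> exz t" "0 \<le> vx t" "0 \<le> vy t"
  by (auto simp: ex_def ey_def exz_def vx_def vy_def Vx_def Vy_def intro!: integral_nonneg_AE)

lemma sum_tri:
  fixes f :: "nat \<Rightarrow> real"
  assumes "\<And>s. 0 \<le> f s"
  shows "(\<Sum>\<tau><T. (1 / real M) * (\<Sum>s<\<tau>. f s)) \<le> (\<Sum>s<T. f s)"
proof -
  have "(\<Sum>\<tau><T. (1 / real M) * (\<Sum>s<\<tau>. f s)) \<le> (\<Sum>\<tau><T. (1 / real M) * (\<Sum>s<T. f s))"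
    using assms by (intro sum_mono mult_left_mono sum_mono2) auto
  also have "\<dots> = (\<Sum>s<T. f s)" using params by simp
  finally show ?thesis .
qed

lemma FINAL_k:
  assumes k: "k < K"
  shows "(\<Sum>\<tau><T. (\<integral>\<omega>. LX \<omega> (k * T + \<tau> + 1) \<partial>Q) + (\<integral>\<omega>. LY \<omega> (k * T + \<tau> + 1) \<partial>Q))
    \<le> (4 / ax\<^sup>2 + 16 * Lx\<^sup>2 + 8 * r\<^sup>2 + 6 * Ly\<^sup>2) * (\<Sum>\<tau><T. ex (k * T + \<tau>))
     + (3 / ay\<^sup>2 + 22 * Ly\<^sup>2) * (\<Sum>\<tau><T. ey (k * T + \<tau>))
     + 8 * r\<^sup>2 * (\<Sum>\<tau><T. exz (k * T + \<tau>)) + real T * (4 * Cx + 3 * Cy)"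
proof -
  have t: "k * T + \<tau> < K * T" if "\<tau> < T" for \<tau>
  proof -
    have "k * T + T \<le> K * T" using k by (metis add.commute mult_Suc less_eq_Suc_le mult_le_mono1)
    then show ?thesis using that by simp
  qed
  define SX where "SX = (\<Sum>\<tau><T. ex (k * T + \<tau>))"
  define SY where "SY = (\<Sum>\<tau><T. ey (k * T + \<tau>))"
  define SZ where "SZ = (\<Sum>\<tau><T. exz (k * T + \<tau>))"
  define SVx where "SVx = (\<Sum>\<tau><T. vx (k * T + \<tau>))"
  define SVy where "SVy = (\<Sum>\<tau><T. vy (k * T + \<tau>))"
  have h1: "(\<Sum>\<tau><T. (\<integral>\<omega>. LX \<omega> (k * T + \<tau> + 1) \<partial>Q) + (\<integral>\<omega>. LY \<omega> (k * T + \<tau> + 1) \<partial>Q))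
     \<le> (\<Sum>\<tau><T. ((4 / ax\<^sup>2 + 8 * Lx\<^sup>2 + 8 * r\<^sup>2) * ex (k * T + \<tau>) + 8 * Ly\<^sup>2 * ey (k * T + \<tau>) + 8 * r\<^sup>2 * exz (k * T + \<tau>) + 4 * vx (k * T + \<tau>))
          + ((3 / ay\<^sup>2 + 3 * Ly\<^sup>2) * ey (k * T + \<tau>) + 3 * Ly\<^sup>2 * ex (k * T + \<tau>) + 3 * vy (k * T + \<tau>)))"
    using ILX[OF t] ILY[OF t] by (intro sum_mono add_mono) auto
  also have "\<dots> = (4 / ax\<^sup>2 + 8 * Lx\<^sup>2 + 8 * r\<^sup>2) * SX + 8 * Ly\<^sup>2 * SY + 8 * r\<^sup>2 * SZ + 4 * SVx
      + ((3 / ay\<^sup>2 + 3 * Ly\<^sup>2) * SY + 3 * Ly\<^sup>2 * SX + 3 * SVy)"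
    by (simp add: SX_def SY_def SZ_def SVx_def SVy_def sum.distrib sum_distrib_left)
  finally have h1: "(\<Sum>\<tau><T. (\<integral>\<omega>. LX \<omega> (k * T + \<tau> + 1) \<partial>Q) + (\<integral>\<omega>. LY \<omega> (k * T + \<tau> + 1) \<partial>Q))
      \<le> (4 / ax\<^sup>2 + 8 * Lx\<^sup>2 + 8 * r\<^sup>2) * SX + 8 * Ly\<^sup>2 * SY + 8 * r\<^sup>2 * SZ + 4 * SVx
      + ((3 / ay\<^sup>2 + 3 * Ly\<^sup>2) * SY + 3 * Ly\<^sup>2 * SX + 3 * SVy)" .
  have "SVx \<le> (\<Sum>\<tau><T. Cx + (1 / real M) * (\<Sum>s<\<tau>. \<integral>\<omega>. bx \<omega> (k * T + s) \<partial>Q))"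
    unfolding SVx_def vx_def using VLx[OF k] by (intro sum_mono) auto
  also have "\<dots> = real T * Cx + (\<Sum>\<tau><T. (1 / real M) * (\<Sum>s<\<tau>. 2 * Lx\<^sup>2 * ex (k * T + s) + 2 * Ly\<^sup>2 * ey (k * T + s)))"
    using Ibx t by (simp add: sum.distrib)
  also have "\<dots> \<le> real T * Cx + (\<Sum>s<T. 2 * Lx\<^sup>2 * ex (k * T + s) + 2 * Ly\<^sup>2 * ey (k * T + s))"
    using ex_nn by (intro add_left_mono sum_tri) auto
  also have "\<dots> = real T * Cx + 2 * Lx\<^sup>2 * SX + 2 * Ly\<^sup>2 * SY"
    by (simp add: SX_def SY_def sum.distrib sum_distrib_left)
  finally have h2: "SVx \<le> real T * Cx + 2 * Lx\<^sup>2 * SX + 2 * Ly\<^sup>2 * SY" .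
  have "SVy \<le> (\<Sum>\<tau><T. Cy + (1 / real M) * (\<Sum>s<\<tau>. \<integral>\<omega>. bY \<omega> (k * T + s) \<partial>Q))"
    unfolding SVy_def vy_def using VLy[OF k] by (intro sum_mono) auto
  also have "\<dots> = real T * Cy + (\<Sum>\<tau><T. (1 / real M) * (\<Sum>s<\<tau>. Ly\<^sup>2 * ex (k * T + s) + Ly\<^sup>2 * ey (k * T + s)))"
    using Iby t by (simp add: sum.distrib)
  also have "\<dots> \<le> real T * Cy + (\<Sum>s<T. Ly\<^sup>2 * ex (k * T + s) + Ly\<^sup>2 * ey (k * T + s))"
    using ex_nn by (intro add_left_mono sum_tri) auto
  also have "\<dots> = real T * Cy + Ly\<^sup>2 * SX + Ly\<^sup>2 * SY"
    by (simp add: SX_def SY_def sum.distrib sum_distrib_left)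
  finally have h3: "SVy \<le> real T * Cy + Ly\<^sup>2 * SX + Ly\<^sup>2 * SY" .
  have fin: "(4 / ax\<^sup>2 + 8 * Lx\<^sup>2 + 8 * r\<^sup>2) * SX + 8 * Ly\<^sup>2 * SY + 8 * r\<^sup>2 * SZ + 4 * SVx
      + ((3 / ay\<^sup>2 + 3 * Ly\<^sup>2) * SY + 3 * Ly\<^sup>2 * SX + 3 * SVy)
    \<le> (4 / ax\<^sup>2 + 16 * Lx\<^sup>2 + 8 * r\<^sup>2 + 6 * Ly\<^sup>2) * SX + (3 / ay\<^sup>2 + 22 * Ly\<^sup>2) * SY + 8 * r\<^sup>2 * SZ
      + real T * (4 * Cx + 3 * Cy)"
    using h2 h3 by (simp add: algebra_simps)
  show ?thesis using order_trans[OF h1 fin] by (simp add: SX_def SY_def SZ_def)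
qed

end



context spider begin

lemma FINAL:
  "(1 / (real K * real T)) * (\<Sum>k<K. \<Sum>\<tau><T. (\<integral>\<omega>. LX \<omega> (k * T + \<tau> + 1) \<partial>Q) + (\<integral>\<omega>. LY \<omega> (k * T + \<tau> + 1) \<partial>Q))
   \<le> (1 / (real K * real T)) * (4 / ax\<^sup>2 + 16 * Lx\<^sup>2 + 8 * r\<^sup>2 + 6 * Ly\<^sup>2) * (\<Sum>k<K. \<Sum>\<tau><T. ex (k * T + \<tau>))
    + (1 / (real K * real T)) * (3 / ay\<^sup>2 + 22 * Ly\<^sup>2) * (\<Sum>k<K. \<Sum>\<tau><T. ey (k * T + \<tau>))
    + 8 * r\<^sup>2 / (real K * real T) * (\<Sum>k<K. \<Sum>\<tau><T. exz (k * T + \<tau>))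
    + (4 * Cx + 3 * Cy)"
proof -
  define cX where "cX = 4 / ax\<^sup>2 + 16 * Lx\<^sup>2 + 8 * r\<^sup>2 + 6 * Ly\<^sup>2"
  define cY where "cY = 3 / ay\<^sup>2 + 22 * Ly\<^sup>2"
  define c where "c = 4 * Cx + 3 * Cy"
  define SX where "SX = (\<Sum>k<K. \<Sum>\<tau><T. ex (k * T + \<tau>))"
  define SY where "SY = (\<Sum>k<K. \<Sum>\<tau><T. ey (k * T + \<tau>))"
  define SZ where "SZ = (\<Sum>k<K. \<Sum>\<tau><T. exz (k * T + \<tau>))"
  have "(\<Sum>k<K. \<Sum>\<tau><T. (\<integral>\<omega>. LX \<omega> (k * T + \<tau> + 1) \<partial>Q) + (\<integral>\<omega>. LY \<omega> (k * T + \<tau> + 1) \<partial>Q))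
     \<le> (\<Sum>k<K. cX * (\<Sum>\<tau><T. ex (k * T + \<tau>)) + cY * (\<Sum>\<tau><T. ey (k * T + \<tau>))
          + 8 * r\<^sup>2 * (\<Sum>\<tau><T. exz (k * T + \<tau>)) + real T * c)"
    unfolding cX_def cY_def c_def by (intro sum_mono FINAL_k) auto
  also have "\<dots> = cX * SX + cY * SY + 8 * r\<^sup>2 * SZ + real K * (real T * c)"
    by (simp add: SX_def SY_def SZ_def sum.distrib sum_distrib_left)
  finally have h: "(\<Sum>k<K. \<Sum>\<tau><T. (\<integral>\<omega>. LX \<omega> (k * T + \<tau> + 1) \<partial>Q) + (\<integral>\<omega>. LY \<omega> (k * T + \<tau> + 1) \<partial>Q))
      \<le> cX * SX + cY * SY + 8 * r\<^sup>2 * SZ + real K * (real T * c)" .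
  have pos: "0 < real K * real T" using params by simp
  have "(1 / (real K * real T)) * (\<Sum>k<K. \<Sum>\<tau><T. (\<integral>\<omega>. LX \<omega> (k * T + \<tau> + 1) \<partial>Q) + (\<integral>\<omega>. LY \<omega> (k * T + \<tau> + 1) \<partial>Q))
     \<le> (1 / (real K * real T)) * (cX * SX + cY * SY + 8 * r\<^sup>2 * SZ + real K * (real T * c))"
    using h pos by (intro mult_left_mono) auto
  also have "\<dots> = (1 / (real K * real T)) * cX * SX + (1 / (real K * real T)) * cY * SY
      + 8 * r\<^sup>2 / (real K * real T) * SZ + c"
  proof -
    have "(1 / (real K * real T)) * (real K * (real T * c)) = c" using params(4,5) by simp
    then show ?thesis unfolding distrib_left by (simp add: mult.assoc)
  qed
  finally show ?thesis unfolding cX_def cY_def c_def SX_def SY_def SZ_def .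
qed

lemma FINAL':
  fixes xs zs :: "'w \<Rightarrow> nat \<Rightarrow> 'a" and ys :: "'w \<Rightarrow> nat \<Rightarrow> 'b"
  assumes xs: "\<And>\<omega> t. xs \<omega> t = xA (\<xi> \<omega>) t" and ys: "\<And>\<omega> t. ys \<omega> t = yA (\<xi> \<omega>) t"
    and zs: "\<And>\<omega> t. zs \<omega> t = zA (\<xi> \<omega>) t"
  shows
    "(1 / (real K * real T)) *
       (\<Sum>k<K. \<Sum>\<tau><T.
          (\<integral>\<omega>. (infdist 0 ((\<lambda>v. Fx (xs \<omega> (k*T+\<tau>+1)) (ys \<omega> (k*T+\<tau>+1)) + v)
                               ` normal_cone X (xs \<omega> (k*T+\<tau>+1))))\<^sup>2 \<partial>Q)
        + (\<integral>\<omega>. (infdist 0 ((\<lambda>v. - Fy (xs \<omega> (k*T+\<tau>+1)) (ys \<omega> (k*T+\<tau>+1)) + v)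
                               ` normal_cone Y (ys \<omega> (k*T+\<tau>+1))))\<^sup>2 \<partial>Q))
     \<le> (1 / (real K * real T)) * (4 / ax\<^sup>2 + 16 * Lx\<^sup>2 + 8 * r\<^sup>2 + 6 * Ly\<^sup>2) *
          (\<Sum>k<K. \<Sum>\<tau><T. \<integral>\<omega>. (norm (xs \<omega> (k*T+\<tau>+1) - xs \<omega> (k*T+\<tau>)))\<^sup>2 \<partial>Q)
       + (1 / (real K * real T)) * (3 / ay\<^sup>2 + 22 * Ly\<^sup>2) *
          (\<Sum>k<K. \<Sum>\<tau><T. \<integral>\<omega>. (norm (ys \<omega> (k*T+\<tau>+1) - ys \<omega> (k*T+\<tau>)))\<^sup>2 \<partial>Q)
       + 8 * r\<^sup>2 / (real K * real T) *
          (\<Sum>k<K. \<Sum>\<tau><T. \<integral>\<omega>. (norm (xs \<omega> (k*T+\<tau>+1) - zs \<omega> (k*T+\<tau>)))\<^sup>2 \<partial>Q)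
       + (4 * Cx + 3 * Cy)"
  using FINAL unfolding xs ys zs LX_def LY_def ex_def ey_def exz_def by simp

end



theorem lemmaA17:
  fixes X :: "'a::euclidean_space set" and Y :: "'b::euclidean_space set"
    and P :: "'c measure" and Q :: "'w measure"
    and f :: "'a \<Rightarrow> 'b \<Rightarrow> 'c \<Rightarrow> real"
    and gx :: "'a \<Rightarrow> 'b \<Rightarrow> 'c \<Rightarrow> 'a" and gy :: "'a \<Rightarrow> 'b \<Rightarrow> 'c \<Rightarrow> 'b"
    and F :: "'a \<Rightarrow> 'b \<Rightarrow> real"
    and Fx :: "'a \<Rightarrow> 'b \<Rightarrow> 'a" and Fy :: "'a \<Rightarrow> 'b \<Rightarrow> 'b"
    and lf Lx Ly \<rho> \<sigma>x \<sigma>y Flow ax ay \<beta> r Cx Cy :: real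
    and K T M B :: nat
    and init :: "'w \<Rightarrow> nat \<Rightarrow> 'a \<Rightarrow> 'b \<Rightarrow> 'a \<times> 'b"
    and \<xi> :: "'w \<Rightarrow> nat \<Rightarrow> nat \<Rightarrow> nat \<Rightarrow> 'c"
    and x0 z0 :: 'a and y0 :: 'b
    and xs zs :: "'w \<Rightarrow> nat \<Rightarrow> 'a" and ys :: "'w \<Rightarrow> nat \<Rightarrow> 'b"
  defines "xs \<equiv> \<lambda>\<omega>. alg_x X Y ax ay \<beta> r T M gx gy (init \<omega>) (\<xi> \<omega>) x0 y0 z0"
      and "ys \<equiv> \<lambda>\<omega>. alg_y X Y ax ay \<beta> r T M gx gy (init \<omega>) (\<xi> \<omega>) x0 y0 z0"
      and "zs \<equiv> \<lambda>\<omega>. alg_z X Y ax ay \<beta> r T M gx gy (init \<omega>) (\<xi> \<omega>) x0 y0 z0"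
  assumes X: "X \<noteq> {}" "closed X" "convex X"
      and Y: "Y \<noteq> {}" "closed Y" "convex Y" "compact Y"
      and P: "prob_space P" and Q: "prob_space Q"
      \<comment> \<open>f is differentiable with partial gradients gx, gy\<close>
      and grad_f_x: "\<And>x y s. ((\<lambda>u. f u y s) has_derivative (\<lambda>h. inner (gx x y s) h)) (at x)"
      and grad_f_y: "\<And>x y s. ((\<lambda>v. f x v s) has_derivative (\<lambda>h. inner (gy x y s) h)) (at y)"
      \<comment> \<open>regularity implicit in the expectations of the Smoothness Assumption\<close>
      and f_int: "\<And>x y. integrable P (f x y)"
      and gx_meas: "(\<lambda>(x, y, s). gx x y s) \<in> borel_measurable (borel \<Otimes>\<^sub>M (borel \<Otimes>\<^sub>M P))"
      and gy_meas: "(\<lambda>(x, y, s). gy x y s) \<in> borel_measurable (borel \<Otimes>\<^sub>M (borel \<Otimes>\<^sub>M P))"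
      and gx_sq: "\<And>x y. x \<in> X \<Longrightarrow> y \<in> Y \<Longrightarrow> integrable P (\<lambda>s. (norm (gx x y s))\<^sup>2)"
      and gy_sq: "\<And>x y. x \<in> X \<Longrightarrow> y \<in> Y \<Longrightarrow> integrable P (\<lambda>s. (norm (gy x y s))\<^sup>2)"
      and F_def: "\<And>x y. F x y = (\<integral>s. f x y s \<partial>P)"
      \<comment> \<open>(ii)\<close>
      and lip: "\<And>x1 x2 y1 y2. x1 \<in> X \<Longrightarrow> x2 \<in> X \<Longrightarrow> y1 \<in> Y \<Longrightarrow> y2 \<in> Y \<Longrightarrow>
                 (\<integral>s. \<bar>f x1 y1 s - f x2 y2 s\<bar> \<partial>P) \<le> lf * (norm (x1 - x2) + norm (y1 - y2))"
      \<comment> \<open>(iii)\<close>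
      and Lxx: "\<And>x1 x2 y. x1 \<in> X \<Longrightarrow> x2 \<in> X \<Longrightarrow> y \<in> Y \<Longrightarrow>
                 (\<integral>s. (norm (gx x1 y s - gx x2 y s))\<^sup>2 \<partial>P) \<le> Lx\<^sup>2 * (norm (x1 - x2))\<^sup>2"
      and Lxy: "\<And>x y1 y2. x \<in> X \<Longrightarrow> y1 \<in> Y \<Longrightarrow> y2 \<in> Y \<Longrightarrow>
                 (\<integral>s. (norm (gx x y1 s - gx x y2 s))\<^sup>2 \<partial>P) \<le> Ly\<^sup>2 * (norm (y1 - y2))\<^sup>2"
      and Ly: "\<And>x1 x2 y1 y2. x1 \<in> X \<Longrightarrow> x2 \<in> X \<Longrightarrow> y1 \<in> Y \<Longrightarrow> y2 \<in> Y \<Longrightarrow>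
                 (\<integral>s. (norm (gy x1 y1 s - gy x2 y2 s))\<^sup>2 \<partial>P)
                   \<le> Ly\<^sup>2 * ((norm (x1 - x2))\<^sup>2 + (norm (y1 - y2))\<^sup>2)"
      \<comment> \<open>(iv)\<close>
      and weak_cvx: "\<And>y. y \<in> Y \<Longrightarrow> convex_on X (\<lambda>x. F x y + \<rho> / 2 * (norm x)\<^sup>2)"
      \<comment> \<open>(v): Fx, Fy form the gradient of F, equal to the expected stochastic gradient\<close>
      and grad_F: "\<And>x y. x \<in> X \<Longrightarrow> y \<in> Y \<Longrightarrow>
                 ((\<lambda>p. F (fst p) (snd p)) has_derivative
                    (\<lambda>h. inner (Fx x y) (fst h) + inner (Fy x y) (snd h))) (at (x, y))"
      and unbiased_x: "\<And>x y. x \<in> X \<Longrightarrow> y \<in> Y \<Longrightarrow> (\<integral>s. gx x y s \<partial>P) = Fx x y"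
      and unbiased_y: "\<And>x y. x \<in> X \<Longrightarrow> y \<in> Y \<Longrightarrow> (\<integral>s. gy x y s \<partial>P) = Fy x y"
      and var_x: "\<And>x y. x \<in> X \<Longrightarrow> y \<in> Y \<Longrightarrow> (\<integral>s. (norm (gx x y s - Fx x y))\<^sup>2 \<partial>P) \<le> \<sigma>x\<^sup>2"
      and var_y: "\<And>x y. x \<in> X \<Longrightarrow> y \<in> Y \<Longrightarrow> (\<integral>s. (norm (gy x y s - Fy x y))\<^sup>2 \<partial>P) \<le> \<sigma>y\<^sup>2"
      \<comment> \<open>(vi)\<close>
      and lower: "\<exists>y\<in>Y. \<forall>x\<in>X. Flow \<le> F x y"
      \<comment> \<open>Algorithm parameters\<close>
      and params: "0 < ax" "0 < ay" "0 < \<beta>" "0 < r" "0 < K" "0 < T" "0 < M" "0 < B" "T = M"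
      and start: "x0 \<in> X" "y0 \<in> Y"
      \<comment> \<open>the two settings\<close>
      and setting:
        "(\<comment> \<open>online setting\<close>
          Cx = \<sigma>x\<^sup>2 / real B \<and> Cy = \<sigma>y\<^sup>2 / real B \<and>
          (\<forall>\<omega> k x y. init \<omega> k x y =
              ((1 / real B) *\<^sub>R (\<Sum>i<B. gx x y (\<xi> \<omega> k 0 i)),
               (1 / real B) *\<^sub>R (\<Sum>i<B. gy x y (\<xi> \<omega> k 0 i)))) \<and>
          prob_space.indep_vars Q (\<lambda>_. P) (\<lambda>(k, \<tau>, i) \<omega>. \<xi> \<omega> k \<tau> i)
             {(k, \<tau>, i). k < K \<and> \<tau> < T \<and> i < (if \<tau> = 0 then B else M)} \<and>
          (\<forall>k \<tau> i. k < K \<and> \<tau> < T \<and> i < (if \<tau> = 0 then B else M) \<longrightarrow>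
             distr Q P (\<lambda>\<omega>. \<xi> \<omega> k \<tau> i) = P))
       \<or> (\<comment> \<open>finite-sum setting: empirical distribution of N samples, full batch B = N\<close>
          \<exists>(N::nat) (d::nat \<Rightarrow> 'c). 0 < N \<and> B = N \<and>
          P = measure_pmf (map_pmf d (pmf_of_set {..<N})) \<and>
          Cx = 0 \<and> Cy = 0 \<and>
          (\<forall>\<omega> k x y. init \<omega> k x y =
              ((1 / real N) *\<^sub>R (\<Sum>j<N. gx x y (d j)),
               (1 / real N) *\<^sub>R (\<Sum>j<N. gy x y (d j)))) \<and>
          prob_space.indep_vars Q (\<lambda>_. P) (\<lambda>(k, \<tau>, i) \<omega>. \<xi> \<omega> k \<tau> i)
             {(k, \<tau>, i). k < K \<and> 1 \<le> \<tau> \<and> \<tau> < T \<and> i < M} \<and>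
          (\<forall>k \<tau> i. k < K \<and> 1 \<le> \<tau> \<and> \<tau> < T \<and> i < M \<longrightarrow>
             distr Q P (\<lambda>\<omega>. \<xi> \<omega> k \<tau> i) = P))"
  shows
    "(1 / (real K * real T)) *
       (\<Sum>k<K. \<Sum>\<tau><T.
          (\<integral>\<omega>. (infdist 0 ((\<lambda>v. Fx (xs \<omega> (k*T+\<tau>+1)) (ys \<omega> (k*T+\<tau>+1)) + v)
                               ` normal_cone X (xs \<omega> (k*T+\<tau>+1))))\<^sup>2 \<partial>Q)
        + (\<integral>\<omega>. (infdist 0 ((\<lambda>v. - Fy (xs \<omega> (k*T+\<tau>+1)) (ys \<omega> (k*T+\<tau>+1)) + v)
                               ` normal_cone Y (ys \<omega> (k*T+\<tau>+1))))\<^sup>2 \<partial>Q))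
     \<le> (1 / (real K * real T)) * (4 / ax\<^sup>2 + 16 * Lx\<^sup>2 + 8 * r\<^sup>2 + 6 * Ly\<^sup>2) *
          (\<Sum>k<K. \<Sum>\<tau><T. \<integral>\<omega>. (norm (xs \<omega> (k*T+\<tau>+1) - xs \<omega> (k*T+\<tau>)))\<^sup>2 \<partial>Q)
       + (1 / (real K * real T)) * (3 / ay\<^sup>2 + 22 * Ly\<^sup>2) *
          (\<Sum>k<K. \<Sum>\<tau><T. \<integral>\<omega>. (norm (ys \<omega> (k*T+\<tau>+1) - ys \<omega> (k*T+\<tau>)))\<^sup>2 \<partial>Q)
       + 8 * r\<^sup>2 / (real K * real T) *
          (\<Sum>k<K. \<Sum>\<tau><T. \<integral>\<omega>. (norm (xs \<omega> (k*T+\<tau>+1) - zs \<omega> (k*T+\<tau>)))\<^sup>2 \<partial>Q)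
       + (4 * Cx + 3 * Cy)"
proof -
  have Yb: "bounded Y" using Y(4) by (rule compact_imp_bounded)
  have P_ps: "prob_space P" by (rule P)
  from setting show ?thesis
  proof
    assume on: "Cx = \<sigma>x\<^sup>2 / real B \<and> Cy = \<sigma>y\<^sup>2 / real B \<and>
          (\<forall>\<omega> k x y. init \<omega> k x y =
              ((1 / real B) *\<^sub>R (\<Sum>i<B. gx x y (\<xi> \<omega> k 0 i)),
               (1 / real B) *\<^sub>R (\<Sum>i<B. gy x y (\<xi> \<omega> k 0 i)))) \<and>
          prob_space.indep_vars Q (\<lambda>_. P) (\<lambda>(k, \<tau>, i) \<omega>. \<xi> \<omega> k \<tau> i)
             {(k, \<tau>, i). k < K \<and> \<tau> < T \<and> i < (if \<tau> = 0 then B else M)} \<and>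
          (\<forall>k \<tau> i. k < K \<and> \<tau> < T \<and> i < (if \<tau> = 0 then B else M) \<longrightarrow>
             distr Q P (\<lambda>\<omega>. \<xi> \<omega> k \<tau> i) = P)"
    define Ion where "Ion = {(k, \<tau>, i). k < K \<and> \<tau> < T \<and> i < (if \<tau> = 0 then B else M)}"
    interpret S: spider X Y P Q gx gy Fx Fy Lx Ly \<sigma>x \<sigma>y ax ay \<beta> r Cx Cy K T M B \<xi> Ion
      "\<lambda>xi k i. xi k 0 i" x0 z0 y0
    proof (rule spider.intro)
      show "bounded Y" by (rule Yb)
      show "prob_space.indep_vars Q (\<lambda>_. P) (\<lambda>(k, \<tau>, i) \<omega>. \<xi> \<omega> k \<tau> i) Ion"
        using on by (simp add: Ion_def)
      show "distr Q P (\<lambda>\<omega>. \<xi> \<omega> k \<tau> i) = P" if "(k, \<tau>, i) \<in> Ion" for k \<tau> i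
        using on that by (auto simp: Ion_def)
      show "(k, \<tau>, i) \<in> Ion" if "k < K" "0 < \<tau>" "\<tau> < T" "i < M" for k \<tau> i
        using that by (simp add: Ion_def)
      show "xi k 0 i = xi' k 0 i"
        if "k < K" "i < B" "\<And>i'. (k, 0, i') \<in> Ion \<Longrightarrow> xi k 0 i' = xi' k 0 i'" for xi xi' :: "nat \<Rightarrow> nat \<Rightarrow> nat \<Rightarrow> 'c" and k i
        using that params by (auto simp: Ion_def)
      show "(\<lambda>u. (\<lambda>k \<tau> i. u (k, \<tau>, i)) k 0 i) \<in> measurable (Pi\<^sub>M A (\<lambda>_. P)) P"
        if "k < K" "i < B" "{j \<in> Ion. fst j = k \<and> fst (snd j) = 0} \<subseteq> A" for A k i
      proof -
        have "(k, 0, i) \<in> A" using that params by (auto simp: Ion_def)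
        then show ?thesis by (simp add: measurable_component_singleton)
      qed
      show "0 < B \<and> Cx = \<sigma>x\<^sup>2 / real B \<and> Cy = \<sigma>y\<^sup>2 / real B \<and> (\<forall>xi k i. xi k 0 i = xi k 0 i)
                 \<and> (\<forall>k<K. \<forall>i<B. (k, 0, i) \<in> Ion) \<or> (Cx = 0 \<and> Cy = 0 \<and> (\<forall>xi k x y. x \<in> X \<longrightarrow> y \<in> Y \<longrightarrow>
                   (1 / real B) *\<^sub>R (\<Sum>i<B. gx x y (xi k 0 i)) = Fx x y \<and>
                   (1 / real B) *\<^sub>R (\<Sum>i<B. gy x y (xi k 0 i)) = Fy x y))"
        using on params by (auto simp: Ion_def)
    qed (fact X Y P Q gx_meas gy_meas gx_sq gy_sq Lxx Lxy Ly unbiased_x unbiased_y var_x var_y params start)+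
    have ie: "init \<omega> = S.IN (\<xi> \<omega>)" for \<omega>
      using on by (auto simp: S.IN_def fun_eq_iff)
    show ?thesis
      by (rule S.FINAL') (simp_all add: assms(1-3) alg_x_def alg_y_def alg_z_def S.xA_def S.yA_def S.zA_def S.AL_def ie)
  next
    assume "\<exists>(N::nat) (d::nat \<Rightarrow> 'c). 0 < N \<and> B = N \<and>
          P = measure_pmf (map_pmf d (pmf_of_set {..<N})) \<and>
          Cx = 0 \<and> Cy = 0 \<and>
          (\<forall>\<omega> k x y. init \<omega> k x y =
              ((1 / real N) *\<^sub>R (\<Sum>j<N. gx x y (d j)),
               (1 / real N) *\<^sub>R (\<Sum>j<N. gy x y (d j)))) \<and>
          prob_space.indep_vars Q (\<lambda>_. P) (\<lambda>(k, \<tau>, i) \<omega>. \<xi> \<omega> k \<tau> i)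
             {(k, \<tau>, i). k < K \<and> 1 \<le> \<tau> \<and> \<tau> < T \<and> i < M} \<and>
          (\<forall>k \<tau> i. k < K \<and> 1 \<le> \<tau> \<and> \<tau> < T \<and> i < M \<longrightarrow>
             distr Q P (\<lambda>\<omega>. \<xi> \<omega> k \<tau> i) = P)"
    then obtain N :: nat and d :: "nat \<Rightarrow> 'c" where N: "0 < N" and PN: "P = measure_pmf (map_pmf d (pmf_of_set {..<N}))"
      and C0: "Cx = 0" "Cy = 0"
      and iN: "\<forall>\<omega> k x y. init \<omega> k x y =
              ((1 / real N) *\<^sub>R (\<Sum>j<N. gx x y (d j)),
               (1 / real N) *\<^sub>R (\<Sum>j<N. gy x y (d j)))"
      and indN: "prob_space.indep_vars Q (\<lambda>_. P) (\<lambda>(k, \<tau>, i) \<omega>. \<xi> \<omega> k \<tau> i)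
             {(k, \<tau>, i). k < K \<and> 1 \<le> \<tau> \<and> \<tau> < T \<and> i < M}"
      and dN: "\<forall>k \<tau> i. k < K \<and> 1 \<le> \<tau> \<and> \<tau> < T \<and> i < M \<longrightarrow>
             distr Q P (\<lambda>\<omega>. \<xi> \<omega> k \<tau> i) = P"
      by blast
    define Ifin where "Ifin = {(k, \<tau>, i). k < K \<and> 1 \<le> \<tau> \<and> \<tau> < T \<and> i < M}"
    have avg: "(1 / real N) *\<^sub>R (\<Sum>j<N. g j) = (\<integral>s. g' s \<partial>P)"
      if g: "\<And>j. g j = g' (d j)" for g :: "nat \<Rightarrow> 'v::euclidean_space" and g'
    proof -
      have "(\<integral>s. g' s \<partial>P) = (\<integral>j. g' (d j) \<partial>measure_pmf (pmf_of_set {..<N}))"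
        by (simp add: PN)
      also have "\<dots> = (\<Sum>j<N. pmf (pmf_of_set {..<N}) j *\<^sub>R g' (d j))"
        by (rule integral_measure_pmf[of "{..<N}"]) (use N in \<open>auto simp: set_pmf_of_set lessThan_empty_iff\<close>)
      also have "\<dots> = (\<Sum>j<N. (1 / real N) *\<^sub>R g j)"
        using N by (intro sum.cong) (auto simp: g pmf_of_set lessThan_empty_iff)
      finally show ?thesis by (simp add: scaleR_sum_right)
    qed
    interpret S: spider X Y P Q gx gy Fx Fy Lx Ly \<sigma>x \<sigma>y ax ay \<beta> r Cx Cy K T M N \<xi> Ifin
      "\<lambda>xi k i. d i" x0 z0 y0
    proof (rule spider.intro)
      show "bounded Y" by (rule Yb)
      show "prob_space.indep_vars Q (\<lambda>_. P) (\<lambda>(k, \<tau>, i) \<omega>. \<xi> \<omega> k \<tau> i) Ifin"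
        using indN by (simp add: Ifin_def)
      show "distr Q P (\<lambda>\<omega>. \<xi> \<omega> k \<tau> i) = P" if "(k, \<tau>, i) \<in> Ifin" for k \<tau> i
        using dN that by (auto simp: Ifin_def)
      show "(k, \<tau>, i) \<in> Ifin" if "k < K" "0 < \<tau>" "\<tau> < T" "i < M" for k \<tau> i
        using that by (simp add: Ifin_def)
      show "d i = d i" for i by (rule refl)
      show "(\<lambda>u. d i) \<in> measurable (Pi\<^sub>M A (\<lambda>_. P)) P" for A and i :: nat
        by (simp add: PN)
      show "(0 < N \<and> Cx = \<sigma>x\<^sup>2 / real N \<and> Cy = \<sigma>y\<^sup>2 / real N \<and> (\<forall>xi::nat \<Rightarrow> nat \<Rightarrow> nat \<Rightarrow> 'c. \<forall>k i. d i = xi k 0 i)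
                 \<and> (\<forall>k<K. \<forall>i<N. (k, 0, i) \<in> Ifin)) \<or> Cx = 0 \<and> Cy = 0 \<and> (\<forall>xi k x y. x \<in> X \<longrightarrow> y \<in> Y \<longrightarrow>
                   (1 / real N) *\<^sub>R (\<Sum>i<N. gx x y (d i)) = Fx x y \<and>
                   (1 / real N) *\<^sub>R (\<Sum>i<N. gy x y (d i)) = Fy x y)"
      proof (rule disjI2, intro conjI allI impI)
        fix xi :: "nat \<Rightarrow> nat \<Rightarrow> nat \<Rightarrow> 'c" and k x y assume xy: "x \<in> X" "y \<in> Y"
        show "(1 / real N) *\<^sub>R (\<Sum>i<N. gx x y (d i)) = Fx x y"
          using avg[of "\<lambda>j. gx x y (d j)" "gx x y"] unbiased_x[OF xy] by simp
        show "(1 / real N) *\<^sub>R (\<Sum>i<N. gy x y (d i)) = Fy x y"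
          using avg[of "\<lambda>j. gy x y (d j)" "gy x y"] unbiased_y[OF xy] by simp
      qed (use C0 in auto)
    qed (fact X Y P Q gx_meas gy_meas gx_sq gy_sq Lxx Lxy Ly unbiased_x unbiased_y var_x var_y params start)+
    have ie: "init \<omega> = S.IN (\<xi> \<omega>)" for \<omega>
      using iN by (auto simp: S.IN_def fun_eq_iff)
    show ?thesis
      by (rule S.FINAL') (simp_all add: assms(1-3) alg_x_def alg_y_def alg_z_def S.xA_def S.yA_def S.zA_def S.AL_def ie)
  qed
qed



end
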